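(* Let $n>1$, let $d$ be a positive integer and let $(y_{\alpha,\beta})_{|\alpha|,|\beta|\leqslant d}$ be complex numbers. Let $K=\{z\in\mathbb{C}^n: g_i(z,\bar z)\geqslant 0,\ i=1,\dots,m\}$ and assume that one of the constraints $g_i$ is the ball constraint $R^2-|z_1|^2-\dots-|z_n|^2$ for some $R>0$. Then there exists a positive $\operatorname{rank}M_d(y)$-atomic measure $\mu$ supported on $K$ such that $$y_{\alpha,\beta}=\int_{\mathbb{C}^n} z^\alpha\bar z^\beta\,d\mu\quad\text{for all }|\alpha|,|\beta|\leqslant d$$ if and only if there exists an extension of the data to complex numbers $(y_{\alpha,\beta})_{|\alpha|,|\beta|\leqslant d+d_K}$ (agreeing with the given $y_{\alpha,\beta}$ for $|\alpha|,|\beta|\leqslant d$) such that: 1. $M_{d+d_K}(y)\succcurlyeq 0$ and $M_{d+d_K-k_i}(g_iy)\succcurlyeq 0$ for $i=1,\dots,m$; 2. $\operatorname{rank}M_{d+d_K}(y)=\operatorname{rank}M_d(y)$; 3. for all $1\leqslant i<j\leqslant n$, $$\begin{pmatrix} M_{d}(y) & M_{d}(z_i y) & M_{d}(z_j y)\\ M_{d}(\bar z_i y) & M_{d}(|z_i|^2 y) & M_{d}(z_j\bar z_i y)\\ M_{d}(\bar z_j y) & M_{d}(z_i\bar z_j y) & M_{d}(|z_j|^2 y)\end{pmatrix}\succcurlyeq 0.$$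
   Context: Multi-index notation: $z^\alpha=z_1^{\alpha_1}\cdots z_n^{\alpha_n}$ for $\alpha\in\mathbb{N}^n$, $|\alpha|=\sum_k\alpha_k$. Each $g_i=\sum_{\alpha,\beta}g_{i,\alpha,\beta}z^\alpha\bar z^\beta$ is a real-valued complex polynomial (finitely many nonzero coefficients, $\overline{g_{i,\alpha,\beta}}=g_{i,\beta,\alpha}$); $k_i=\max\{|\alpha|,|\beta|: g_{i,\alpha,\beta}\neq 0\}$ and $d_K=\max\{2,k_1,\dots,k_m\}$. The moment matrix is $M_s(y)=(y_{\alpha,\beta})_{|\alpha|,|\beta|\leqslant s}$ and, for a polynomial $g=\sum_{\gamma,\delta}g_{\gamma,\delta}z^\gamma\bar z^\delta$, the localizing matrix is $M_s(gy)=\big(\sum_{\gamma,\delta}g_{\gamma,\delta}y_{\alpha+\gamma,\beta+\delta}\big)_{|\alpha|,|\beta|\leqslant s}$ (e.g. $M_s(z_iy)=(y_{\alpha+e_i,\beta})$, $M_s(\bar z_i y)=(y_{\alpha,\beta+e_i})$, $M_s(z_j\bar z_iy)=(y_{\alpha+e_j,\beta+e_i})$). $\succcurlyeq0$ means Hermitian positive semidefinite. A positive $r$-atomic measure supported on $K$ is $\mu=\sum_{j=1}^r w_j\delta_{z^{(j)}}$ with $w_j>0$ and $r$ distinct points $z^{(j)}\in K$. *)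

theory Defs
  imports Complex_Main
begin

(* Multi-indices in N^n are lists of naturals of length n (coordinate k <-> index k, 0-based).
   Points of C^n are complex lists of length n. *)

definition mdeg :: "nat list \<Rightarrow> nat" where
  "mdeg \<alpha> = sum_list \<alpha>"

definition midx :: "nat \<Rightarrow> nat \<Rightarrow> nat list set" where
  "midx n s = {\<alpha>. length \<alpha> = n \<and> mdeg \<alpha> \<le> s}"

definition madd :: "nat list \<Rightarrow> nat list \<Rightarrow> nat list" where
  "madd \<alpha> \<beta> = map2 (+) \<alpha> \<beta>"

definition mzero :: "nat \<Rightarrow> nat list" where
  "mzero n = replicate n 0"

definition munit :: "nat \<Rightarrow> nat \<Rightarrow> nat list" where
  "munit n i = map (\<lambda>k. if k = i then 1 else 0) [0..<n]"

definition zmon :: "complex list \<Rightarrow> nat list \<Rightarrow> complex" where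
  "zmon z \<alpha> = (\<Prod>k<length \<alpha>. (z ! k) ^ (\<alpha> ! k))"

(* A polynomial in z, zbar is given by its coefficient function (alpha,beta) |-> g_{alpha,beta}. *)
type_synonym cpoly = "nat list \<Rightarrow> nat list \<Rightarrow> complex"

definition psupp :: "cpoly \<Rightarrow> (nat list \<times> nat list) set" where
  "psupp g = {(\<alpha>, \<beta>). g \<alpha> \<beta> \<noteq> 0}"

definition real_cpoly :: "nat \<Rightarrow> cpoly \<Rightarrow> bool" where
  "real_cpoly n g \<longleftrightarrow> finite (psupp g)
     \<and> (\<forall>(\<alpha>, \<beta>) \<in> psupp g. length \<alpha> = n \<and> length \<beta> = n)
     \<and> (\<forall>\<alpha> \<beta>. cnj (g \<alpha> \<beta>) = g \<beta> \<alpha>)"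

definition peval :: "cpoly \<Rightarrow> complex list \<Rightarrow> complex" where
  "peval g z = (\<Sum>(\<alpha>, \<beta>) \<in> psupp g. g \<alpha> \<beta> * zmon z \<alpha> * cnj (zmon z \<beta>))"

definition pdeg :: "cpoly \<Rightarrow> nat" where
  "pdeg g = Max ({0} \<union> {max (mdeg \<alpha>) (mdeg \<beta>) | \<alpha> \<beta>. g \<alpha> \<beta> \<noteq> 0})"

definition dK :: "nat \<Rightarrow> (nat \<Rightarrow> cpoly) \<Rightarrow> nat" where
  "dK m g = Max ({2} \<union> {pdeg (g i) | i. i < m})"

definition Kset :: "nat \<Rightarrow> nat \<Rightarrow> (nat \<Rightarrow> cpoly) \<Rightarrow> complex list set" where
  "Kset n m g = {z. length z = n \<and> (\<forall>i<m. peval (g i) z \<in> \<real> \<and> 0 \<le> Re (peval (g i) z))}"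

definition ball_poly :: "nat \<Rightarrow> real \<Rightarrow> cpoly" where
  "ball_poly n R \<alpha> \<beta> =
     (if \<alpha> = mzero n \<and> \<beta> = mzero n then complex_of_real (R\<^sup>2)
      else if (\<exists>k<n. \<alpha> = munit n k \<and> \<beta> = munit n k) then -1 else 0)"

definition mono_poly :: "nat list \<Rightarrow> nat list \<Rightarrow> cpoly" where
  "mono_poly \<gamma> \<delta> = (\<lambda>\<alpha> \<beta>. if \<alpha> = \<gamma> \<and> \<beta> = \<delta> then 1 else 0)"

type_synonym 'i cmat = "'i \<Rightarrow> 'i \<Rightarrow> complex"

definition mom_mat :: "cpoly \<Rightarrow> nat list cmat" where
  "mom_mat y = (\<lambda>\<alpha> \<beta>. y \<alpha> \<beta>)"

definition loc_mat :: "cpoly \<Rightarrow> cpoly \<Rightarrow> nat list cmat" where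
  "loc_mat g y = (\<lambda>\<alpha> \<beta>. \<Sum>(\<gamma>, \<delta>) \<in> psupp g. g \<gamma> \<delta> * y (madd \<alpha> \<gamma>) (madd \<beta> \<delta>))"

definition psd :: "'i set \<Rightarrow> 'i cmat \<Rightarrow> bool" where
  "psd I M \<longleftrightarrow> (\<forall>a\<in>I. \<forall>b\<in>I. M b a = cnj (M a b))
     \<and> (\<forall>v. 0 \<le> Re (\<Sum>a\<in>I. \<Sum>b\<in>I. cnj (v a) * M a b * v b))"

definition cols_indep :: "'i set \<Rightarrow> 'i set \<Rightarrow> 'i cmat \<Rightarrow> bool" where
  "cols_indep I J M \<longleftrightarrow>
     (\<forall>c. (\<forall>a\<in>I. (\<Sum>b\<in>J. M a b * c b) = 0) \<longrightarrow> (\<forall>b\<in>J. c b = 0))"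

definition mrank :: "'i set \<Rightarrow> 'i cmat \<Rightarrow> nat" where
  "mrank I M = Max {card J | J. J \<subseteq> I \<and> cols_indep I J M}"

definition atomic_repr :: "nat \<Rightarrow> nat \<Rightarrow> complex list set \<Rightarrow> nat \<Rightarrow> cpoly \<Rightarrow> bool" where
  "atomic_repr n d K r y \<longleftrightarrow>
     (\<exists>(pts :: complex list list) (w :: nat \<Rightarrow> real).
        length pts = r \<and> distinct pts \<and> (\<forall>j<r. pts ! j \<in> K \<and> 0 < w j)
        \<and> (\<forall>\<alpha>\<in>midx n d. \<forall>\<beta>\<in>midx n d.
             y \<alpha> \<beta> = (\<Sum>j<r. complex_of_real (w j) * zmon (pts ! j) \<alpha> * cnj (zmon (pts ! j) \<beta>))))"

(* The 3x3 block matrix of condition 3 for coordinates i, j; block (p,q) is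
   M_d(z_{w q} zbar_{w p} y) with w 0 = (none), w 1 = i, w 2 = j. *)
definition bexp :: "nat \<Rightarrow> nat \<Rightarrow> nat \<Rightarrow> nat \<Rightarrow> nat list" where
  "bexp n i j p = (if p = 1 then munit n i else if p = 2 then munit n j else mzero n)"

definition block_mat :: "nat \<Rightarrow> nat \<Rightarrow> nat \<Rightarrow> cpoly \<Rightarrow> (nat \<times> nat list) cmat" where
  "block_mat n i j y = (\<lambda>(p, \<alpha>) (q, \<beta>).
      loc_mat (mono_poly (bexp n i j q) (bexp n i j p)) y \<alpha> \<beta>)"

end

theory Submission
  imports Defs "HOL-Library.Function_Algebras" "HOL-Computational_Algebra.Fundamental_Theorem_Algebra"
begin


definition sv :: "complex \<Rightarrow> ('i \<Rightarrow> complex) \<Rightarrow> ('i \<Rightarrow> complex)" where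
  "sv c x = (\<lambda>a. c * x a)"

lemma sv_apply[simp]: "sv c x a = c * x a" by (simp add: sv_def)

lemma sum_fun_apply: "(sum f A) x = (\<Sum>a\<in>A. f a x)"
  by (induction A rule: infinite_finite_induct) auto

interpretation cvs: vector_space "sv :: complex \<Rightarrow> ('i \<Rightarrow> complex) \<Rightarrow> _"
  by unfold_locales (auto simp: sv_def fun_eq_iff algebra_simps)

lemma fam_bound:
  fixes f :: "'j \<Rightarrow> ('i \<Rightarrow> complex)" and g :: "nat \<Rightarrow> ('i \<Rightarrow> complex)"
  assumes fin: "finite J"
  and sp: "\<forall>j\<in>J. \<exists>a. f j = (\<Sum>k<r. sv (a k) (g k))"
  and ind: "\<forall>c. (\<Sum>j\<in>J. sv (c j) (f j)) = 0 \<longrightarrow> (\<forall>j\<in>J. c j = 0)"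
  shows "card J \<le> r"
proof -
  have inj: "inj_on f J"
  proof (rule inj_onI, rule ccontr)
    fix j j' assume jj: "j \<in> J" "j' \<in> J" "f j = f j'" "j \<noteq> j'"
    define c where "c = (\<lambda>x. if x = j then (1::complex) else if x = j' then -1 else 0)"
    have "(\<Sum>x\<in>J. sv (c x) (f x)) = sv (c j) (f j) + sv (c j') (f j') + (\<Sum>x\<in>J-{j,j'}. sv (c x) (f x))"
      using jj fin by (simp add: sum.remove[of J j] sum.remove[of "J-{j}" j'] insert_Diff_if  Diff_insert2[symmetric] algebra_simps)
    also have "\<dots> = 0" using jj by (auto simp: c_def fun_eq_iff intro!: sum.neutral)
    finally have "(\<Sum>x\<in>J. sv (c x) (f x)) = 0" .
    then have "c j = 0" using ind jj by blast
    then show False by (simp add: c_def)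
  qed
  have "cvs.independent (f ` J)"
  proof -
    have "\<not> (\<exists>u. (\<exists>v\<in>f ` J. u v \<noteq> 0) \<and> (\<Sum>v\<in>f ` J. sv (u v) v) = 0)"
    proof
      assume "\<exists>u. (\<exists>v\<in>f ` J. u v \<noteq> 0) \<and> (\<Sum>v\<in>f ` J. sv (u v) v) = 0"
      then obtain c v where h: "v \<in> f ` J" "c v \<noteq> 0" "(\<Sum>v\<in>f ` J. sv (c v) v) = 0" by blast
      have "(\<Sum>j\<in>J. sv (c (f j)) (f j)) = 0" using h(3) by (simp add: sum.reindex[OF inj])
      then show False using ind h(1,2) by auto
    qed
    then show ?thesis using cvs.dependent_finite[of "f ` J"] fin by simp
  qed
  moreover have "f ` J \<subseteq> cvs.span (g ` {..<r})"
  proof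
    fix v assume "v \<in> f ` J"
    then obtain j where j: "j \<in> J" "v = f j" by auto
    then obtain a where a: "f j = (\<Sum>k<r. sv (a k) (g k))" using sp by auto
    show "v \<in> cvs.span (g ` {..<r})" unfolding j a
      by (intro cvs.span_sum cvs.span_scale cvs.span_base) auto
  qed
  ultimately have "card (f ` J) \<le> card (g ` {..<r})"
    using cvs.independent_span_bound[of "g ` {..<r}" "f ` J"] by auto
  also have "\<dots> \<le> r" using card_image_le[of "{..<r}" g] by simp
  finally show ?thesis using card_image[OF inj] by simp
qed


lemma finite_midx: "finite (midx n s)"
proof -
  have "midx n s \<subseteq> {xs. set xs \<subseteq> {0..s} \<and> length xs = n}"
    unfolding midx_def mdeg_def
  proof safe
    fix xs x assume "sum_list xs \<le> s" "x \<in> set xs"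
    then show "x \<in> {0..s}" using member_le_sum_list[of x xs] by auto
  qed
  then show ?thesis using finite_lists_length_eq[of "{0..s}" n] finite_subset by blast
qed

lemma length_madd[simp]: "length (madd a b) = min (length a) (length b)"
  by (simp add: madd_def)

lemma nth_madd[simp]: "k < length a \<Longrightarrow> k < length b \<Longrightarrow> madd a b ! k = a ! k + b ! k"
  by (simp add: madd_def)

lemma mdeg_madd: "length a = length b \<Longrightarrow> mdeg (madd a b) = mdeg a + mdeg b"
  unfolding mdeg_def madd_def by (induction a b rule: list_induct2) auto

lemma length_mzero[simp]: "length (mzero n) = n" by (simp add: mzero_def)
lemma length_munit[simp]: "length (munit n i) = n" by (simp add: munit_def)
lemma mdeg_mzero[simp]: "mdeg (mzero n) = 0" by (simp add: mzero_def mdeg_def)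

lemma nth_munit: "k < n \<Longrightarrow> munit n i ! k = (if k = i then 1 else 0)"
  by (simp add: munit_def)

lemma mdeg_munit: "i < n \<Longrightarrow> mdeg (munit n i) = 1"
proof -
  assume i: "i < n"
  have "mdeg (munit n i) = (\<Sum>k<n. if k = i then 1 else 0)"
    unfolding mdeg_def munit_def by (simp add: sum_list_sum_nth atLeast0LessThan)
  also have "\<dots> = 1" using i by simp
  finally show ?thesis .
qed

lemma madd_mzero[simp]: "length a = n \<Longrightarrow> madd a (mzero n) = a"
  by (simp add: madd_def mzero_def list_eq_iff_nth_eq)

lemma madd_mzero_left[simp]: "length a = n \<Longrightarrow> madd (mzero n) a = a"
  by (simp add: madd_def mzero_def list_eq_iff_nth_eq)

lemma madd_assoc: "length a = length b \<Longrightarrow> length b = length c \<Longrightarrow>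
   madd (madd a b) c = madd a (madd b c)"
  by (simp add: list_eq_iff_nth_eq)

lemma madd_comm: "length a = length b \<Longrightarrow> madd a b = madd b a"
  by (simp add: list_eq_iff_nth_eq)

lemma mzero_ne_munit: "i < n \<Longrightarrow> mzero n \<noteq> munit n i"
  by (metis mdeg_munit mdeg_mzero zero_neq_one)

lemma munit_inj: "i < n \<Longrightarrow> j < n \<Longrightarrow> munit n i = munit n j \<Longrightarrow> i = j"
  by (metis nth_munit zero_neq_one)

lemma zmon_madd: "length a = length b \<Longrightarrow> zmon z (madd a b) = zmon z a * zmon z b"
  unfolding zmon_def by (simp add: power_add prod.distrib)

lemma zmon_mzero[simp]: "zmon z (mzero n) = 1"
  by (simp add: zmon_def mzero_def)

lemma zmon_munit: "i < n \<Longrightarrow> zmon z (munit n i) = z ! i"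
proof -
  assume i: "i < n"
  have "zmon z (munit n i) = (\<Prod>k<n. (z ! k) ^ (if k = i then 1 else 0))"
    unfolding zmon_def by (simp add: nth_munit)
  also have "\<dots> = (\<Prod>k<n. if k = i then z ! k else 1)" by (intro prod.cong) auto
  also have "\<dots> = z ! i" using i by simp
  finally show ?thesis .
qed

lemma zmon_cnj: "length z = length a \<Longrightarrow> zmon (map cnj z) a = cnj (zmon z a)"
  unfolding zmon_def by simp

lemma midx_madd: "a \<in> midx n s \<Longrightarrow> length c = n \<Longrightarrow> s + mdeg c \<le> t \<Longrightarrow> madd a c \<in> midx n t"
  unfolding midx_def by (auto simp: mdeg_madd)

lemma midx_mono: "s \<le> t \<Longrightarrow> midx n s \<subseteq> midx n t"
  unfolding midx_def by auto

lemma mdeg0: "length a = n \<Longrightarrow> mdeg a = 0 \<Longrightarrow> a = mzero n"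
  unfolding mdeg_def mzero_def
  by (metis list_eq_iff_nth_eq elem_le_sum_list le_zero_eq length_replicate nth_replicate)

lemma mdecomp:
  assumes "length a = n" "mdeg a > 0"
  shows "\<exists>k<n. \<exists>a'. a = madd a' (munit n k) \<and> length a' = n \<and> mdeg a = Suc (mdeg a')"
proof -
  have "\<exists>k<n. a ! k > 0"
  proof (rule ccontr)
    assume "\<not> ?thesis"
    then have "a = mzero n" using assms(1) by (auto simp: mzero_def list_eq_iff_nth_eq)
    then show False using assms(2) by simp
  qed
  then obtain k where k: "k < n" "a ! k > 0" by auto
  define a' where "a' = a[k := a ! k - 1]"
  have l: "length a' = n" using assms by (simp add: a'_def)
  have eq: "a = madd a' (munit n k)"
    using k assms l by (auto simp: list_eq_iff_nth_eq a'_def nth_munit nth_list_update)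
  have "mdeg a = mdeg a' + 1" using l eq mdeg_madd[of a' "munit n k"] mdeg_munit[OF k(1)] by simp
  then show ?thesis using eq l k by auto
qed


definition qf :: "'i set \<Rightarrow> 'i cmat \<Rightarrow> ('i \<Rightarrow> complex) \<Rightarrow> ('i \<Rightarrow> complex) \<Rightarrow> complex" where
  "qf I M u v = (\<Sum>a\<in>I. \<Sum>b\<in>I. cnj (u a) * M a b * v b)"

lemma qf_add_left: "qf I M (x + y) z = qf I M x z + qf I M y z"
  unfolding qf_def by (simp add: algebra_simps sum.distrib)
lemma qf_add_right: "qf I M z (x + y) = qf I M z x + qf I M z y"
  unfolding qf_def by (simp add: algebra_simps sum.distrib)
lemma qf_diff_left: "qf I M (x - y) z = qf I M x z - qf I M y z"
  unfolding qf_def by (simp add: algebra_simps sum_subtractf)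
lemma qf_diff_right: "qf I M z (x - y) = qf I M z x - qf I M z y"
  unfolding qf_def by (simp add: algebra_simps sum_subtractf)
lemma qf_sv_left: "qf I M (sv c x) z = cnj c * qf I M x z"
  unfolding qf_def by (simp add: algebra_simps sum_distrib_left)
lemma qf_sv_right: "qf I M z (sv c x) = c * qf I M z x"
  unfolding qf_def by (simp add: algebra_simps sum_distrib_left)
lemma qf_zero_left[simp]: "qf I M 0 z = 0" by (simp add: qf_def)
lemma qf_zero_right[simp]: "qf I M z 0 = 0" by (simp add: qf_def)
lemma qf_sum_left: "qf I M (sum f S) z = (\<Sum>s\<in>S. qf I M (f s) z)"
proof (induction S rule: infinite_finite_induct)
  case (insert x F) then show ?case by (simp only: sum.insert[OF insert.hyps] qf_add_left insert.IH)
qed (simp_all add: qf_def)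
lemma qf_sum_right: "qf I M z (sum f S) = (\<Sum>s\<in>S. qf I M z (f s))"
proof (induction S rule: infinite_finite_induct)
  case (insert x F) then show ?case by (simp only: sum.insert[OF insert.hyps] qf_add_right insert.IH)
qed (simp_all add: qf_def)

lemma qf_cong: "(\<forall>a\<in>I. x a = x' a) \<Longrightarrow> (\<forall>a\<in>I. z a = z' a) \<Longrightarrow> qf I M x z = qf I M x' z'"
  unfolding qf_def by simp

lemma psd_herm: "psd I M \<Longrightarrow> a \<in> I \<Longrightarrow> b \<in> I \<Longrightarrow> M b a = cnj (M a b)"
  unfolding psd_def by blast

lemma psd_qf: "psd I M \<Longrightarrow> 0 \<le> Re (qf I M v v)"
  unfolding psd_def qf_def by blast

lemma qf_cnj: assumes "\<forall>a\<in>I. \<forall>b\<in>I. M b a = cnj (M a b)"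
  shows "cnj (qf I M u v) = qf I M v u"
proof -
  have "cnj (qf I M u v) = (\<Sum>a\<in>I. \<Sum>b\<in>I. cnj (v b) * M b a * u a)"
    unfolding qf_def cnj_sum
  proof (intro sum.cong refl)
    fix a b assume "a \<in> I" "b \<in> I"
    then have "M b a = cnj (M a b)" using assms by blast
    then show "cnj (cnj (u a) * M a b * v b) = cnj (v b) * M b a * u a" by simp
  qed
  also have "\<dots> = qf I M v u" unfolding qf_def by (rule sum.swap)
  finally show ?thesis .
qed

lemma qf_real: assumes "\<forall>a\<in>I. \<forall>b\<in>I. M b a = cnj (M a b)"
  shows "qf I M v v = complex_of_real (Re (qf I M v v))"
proof -
  have "cnj (qf I M v v) = qf I M v v" using qf_cnj[OF assms, of v v] .
  then have "Im (qf I M v v) = 0" by (metis cnj.simps(2) neg_equal_zero)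
  then show ?thesis by (simp add: complex_eq_iff)
qed

lemma real_quad_zero:
  fixes W Q :: real
  assumes "\<forall>s. 0 \<le> s\<^sup>2 * Q - 2 * s * W"
  shows "W = 0"
proof (rule ccontr)
  assume W: "W \<noteq> 0"
  define q where "q = \<bar>Q\<bar> + 1"
  have pos: "q > 0" unfolding q_def by simp
  define s where "s = W / q"
  have "s\<^sup>2 * Q \<le> s\<^sup>2 * \<bar>Q\<bar>" by (simp add: mult_left_mono)
  moreover have "s\<^sup>2 * \<bar>Q\<bar> - 2 * s * W = W\<^sup>2 / q * (\<bar>Q\<bar> / q - 2)"
    unfolding s_def using pos by (simp add: field_simps power2_eq_square)
  moreover have "\<bar>Q\<bar> / q < 1" using pos by (simp add: q_def)
  moreover have "W\<^sup>2 / q > 0" using W pos by simp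
  ultimately have "s\<^sup>2 * Q - 2 * s * W < 0"
    by (smt (verit) mult_pos_neg)
  then show False using assms by (meson not_le)
qed

lemma psd_kernel:
  assumes psd: "psd I M" and fin: "finite I" and z: "qf I M v v = 0"
  shows "\<forall>a\<in>I. (\<Sum>b\<in>I. M a b * v b) = 0"
proof -
  have herm: "\<forall>a\<in>I. \<forall>b\<in>I. M b a = cnj (M a b)" using psd unfolding psd_def by blast
  define w where "w = (\<lambda>a. \<Sum>b\<in>I. M a b * v b)"
  define W where "W = (\<Sum>a\<in>I. (cmod (w a))\<^sup>2)"
  have qwv: "qf I M w v = complex_of_real W"
  proof -
    have "qf I M w v = (\<Sum>a\<in>I. cnj (w a) * w a)"
      unfolding qf_def w_def by (simp add: sum_distrib_left mult.assoc)
    also have "\<dots> = (\<Sum>a\<in>I. complex_of_real ((cmod (w a))\<^sup>2))"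
      by (intro sum.cong refl) (metis complex_norm_square mult.commute)
    also have "\<dots> = complex_of_real W" unfolding W_def by simp
    finally show ?thesis .
  qed
  have qvw: "qf I M v w = complex_of_real W"
    using qf_cnj[OF herm, of w v] qwv by simp
  define Q where "Q = Re (qf I M w w)"
  have "\<forall>s::real. 0 \<le> s\<^sup>2 * Q - 2 * s * W"
  proof
    fix s :: real
    have "qf I M (v - sv s w) (v - sv s w) = qf I M v v - s * qf I M v w - s * qf I M w v + s * s * qf I M w w"
      by (simp add: qf_diff_left qf_diff_right qf_sv_left qf_sv_right algebra_simps)
    also have "\<dots> = - 2 * s * W + s * s * qf I M w w" using z qwv qvw by simp
    finally have "Re (qf I M (v - sv s w) (v - sv s w)) = s\<^sup>2 * Q - 2 * s * W"
      by (simp add: Q_def power2_eq_square)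
    then show "0 \<le> s\<^sup>2 * Q - 2 * s * W" using psd_qf[OF psd] by metis
  qed
  then have "W = 0" by (rule real_quad_zero)
  then have "\<forall>a\<in>I. (cmod (w a))\<^sup>2 = 0"
    using fin unfolding W_def by (subst (asm) sum_nonneg_eq_0_iff) auto
  then show ?thesis unfolding w_def by simp
qed

lemma cols_indep_empty: "cols_indep I {} M" by (simp add: cols_indep_def)

lemma mrank_set_fin: assumes "finite I"
  shows "finite {card J | J. J \<subseteq> I \<and> cols_indep I J M}"
proof -
  have "{card J | J. J \<subseteq> I \<and> cols_indep I J M} \<subseteq> {0..card I}"
  proof
    fix x assume "x \<in> {card J | J. J \<subseteq> I \<and> cols_indep I J M}"
    then obtain J where "x = card J" "J \<subseteq> I" by blast
    then show "x \<in> {0..card I}" using card_mono[OF assms] by simp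
  qed
  then show ?thesis using finite_subset by blast
qed

lemma mrank_ge: "finite I \<Longrightarrow> J \<subseteq> I \<Longrightarrow> cols_indep I J M \<Longrightarrow> card J \<le> mrank I M"
  unfolding mrank_def by (rule Max_ge[OF mrank_set_fin]) auto

lemma mrank_ex: assumes "finite I"
  shows "\<exists>J. J \<subseteq> I \<and> cols_indep I J M \<and> card J = mrank I M"
proof -
  have "mrank I M \<in> {card J | J. J \<subseteq> I \<and> cols_indep I J M}"
    unfolding mrank_def using mrank_set_fin[OF assms] cols_indep_empty
    by (intro Max_in) auto
  then show ?thesis by auto
qed

lemma cols_indep_rows:
  assumes "cols_indep I J M" "I \<subseteq> I'" "\<forall>a\<in>I. \<forall>b\<in>J. M' a b = M a b"
  shows "cols_indep I' J M'"
  unfolding cols_indep_def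
proof (intro allI impI)
  fix c assume h: "\<forall>a\<in>I'. (\<Sum>b\<in>J. M' a b * c b) = 0"
  have "\<forall>a\<in>I. (\<Sum>b\<in>J. M a b * c b) = 0"
  proof
    fix a assume a: "a \<in> I"
    then have "(\<Sum>b\<in>J. M' a b * c b) = 0" using h assms(2) by blast
    moreover have "(\<Sum>b\<in>J. M' a b * c b) = (\<Sum>b\<in>J. M a b * c b)"
      using a assms(3) by (intro sum.cong) auto
    ultimately show "(\<Sum>b\<in>J. M a b * c b) = 0" by simp
  qed
  then show "\<forall>b\<in>J. c b = 0" using assms(1) unfolding cols_indep_def by blast
qed

lemma mrank_le_span:
  fixes M :: "'i cmat"
  assumes fin: "finite I" and sp: "\<forall>a\<in>I. \<forall>b\<in>I. M a b = (\<Sum>k<r. f k a * h k b)"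
  shows "mrank I M \<le> r"
proof -
  obtain J where J: "J \<subseteq> I" "cols_indep I J M" "card J = mrank I M" using mrank_ex[OF fin] by blast
  define col where "col = (\<lambda>b a. if a \<in> I then M a b else 0)"
  define g where "g = (\<lambda>k a. if a \<in> I then f k a else 0)"
  have "card J \<le> r"
  proof (rule fam_bound[where J=J and f=col and r=r and g=g])
    show "finite J" using J fin finite_subset by blast
    show "\<forall>j\<in>J. \<exists>a. col j = (\<Sum>k<r. sv (a k) (g k))"
    proof
      fix j assume "j \<in> J"
      then have j: "j \<in> I" using J by auto
      show "\<exists>a. col j = (\<Sum>k<r. sv (a k) (g k))"
        by (rule exI[of _ "\<lambda>k. h k j"])
           (auto simp: fun_eq_iff sum_fun_apply col_def g_def sp j mult.commute)
    qed
    show "\<forall>c. (\<Sum>j\<in>J. sv (c j) (col j)) = 0 \<longrightarrow> (\<forall>j\<in>J. c j = 0)"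
    proof (intro allI impI)
      fix c assume h: "(\<Sum>j\<in>J. sv (c j) (col j)) = 0"
      have "\<forall>a\<in>I. (\<Sum>b\<in>J. M a b * c b) = 0"
      proof
        fix a assume a: "a \<in> I"
        have "(\<Sum>j\<in>J. sv (c j) (col j)) a = 0" using h by simp
        then show "(\<Sum>b\<in>J. M a b * c b) = 0" using a by (simp add: sum_fun_apply col_def mult.commute)
      qed
      then show "\<forall>j\<in>J. c j = 0" using J(2) unfolding cols_indep_def by blast
    qed
  qed
  then show ?thesis using J by simp
qed


declare sv_apply[simp del] plus_fun_apply[simp del] zero_fun_apply[simp del]
lemmas fa = sv_apply plus_fun_apply zero_fun_apply minus_apply uminus_apply

definition lin :: "(('i \<Rightarrow> complex) \<Rightarrow> ('i \<Rightarrow> complex)) \<Rightarrow> bool" where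
  "lin T \<longleftrightarrow> (\<forall>x y. T (x + y) = T x + T y) \<and> (\<forall>c x. T (sv c x) = sv c (T x))"

definition subsp :: "('i \<Rightarrow> complex) set \<Rightarrow> bool" where
  "subsp W \<longleftrightarrow> 0 \<in> W \<and> (\<forall>x\<in>W. \<forall>y\<in>W. x + y \<in> W) \<and> (\<forall>c. \<forall>x\<in>W. sv c x \<in> W)"

lemma sv_zero[simp]: "sv 0 x = 0" by (simp add: fa fun_eq_iff)
lemma sv_zero2[simp]: "sv c 0 = 0" by (simp add: fa fun_eq_iff)
lemma sv_one[simp]: "sv 1 x = x" by (simp add: fa fun_eq_iff)
lemma sv_sv[simp]: "sv a (sv b x) = sv (a * b) x" by (simp add: fa fun_eq_iff)
lemma sv_add: "sv a (x + y) = sv a x + sv a y" by (simp add: fa fun_eq_iff algebra_simps)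
lemma sv_add2: "sv (a + b) x = sv a x + sv b x" by (simp add: fa fun_eq_iff algebra_simps)
lemma sv_diff: "sv a (x - y) = sv a x - sv a y" by (simp add: fa fun_eq_iff algebra_simps)
lemma sv_sum: "sv a (sum f S) = (\<Sum>s\<in>S. sv a (f s))"
  by (simp add: fa fun_eq_iff sum_fun_apply sum_distrib_left)

lemma lin_zero: "lin T \<Longrightarrow> T 0 = 0"
  unfolding lin_def by (metis sv_zero)
lemma lin_add: "lin T \<Longrightarrow> T (x + y) = T x + T y"
  unfolding lin_def by blast
lemma lin_sv: "lin T \<Longrightarrow> T (sv c x) = sv c (T x)"
  unfolding lin_def by blast
lemma lin_minus: "lin T \<Longrightarrow> T (- x) = - T x"
proof -
  assume l: "lin T"
  have "T (- x) + T x = 0" using lin_add[OF l, of "-x" x] lin_zero[OF l] by simp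
  then show ?thesis by (simp add: eq_neg_iff_add_eq_0)
qed
lemma lin_diff: "lin T \<Longrightarrow> T (x - y) = T x - T y"
  using lin_add[of T x "-y"] lin_minus[of T y] by simp
lemma lin_sum: assumes l: "lin T" shows "T (sum f S) = (\<Sum>s\<in>S. T (f s))"
proof (induction S rule: infinite_finite_induct)
  case empty show ?case by (simp only: sum.empty lin_zero[OF l])
next case (infinite S) show ?case by (simp only: sum.infinite[OF infinite] lin_zero[OF l])
next case (insert x F) then show ?case by (simp only: sum.insert[OF insert.hyps] lin_add[OF l])
qed

lemma lin_pow: assumes l: "lin T" shows "lin (T ^^ k)"
proof (induction k)
  case 0 then show ?case by (simp add: lin_def)
next
  case (Suc k)
  show ?case unfolding lin_def
    by (simp add: lin_add[OF Suc] lin_sv[OF Suc] lin_add[OF l] lin_sv[OF l])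
qed

lemma subsp_sum: assumes W: "subsp W" shows "(\<forall>s\<in>S. f s \<in> W) \<Longrightarrow> sum f S \<in> W"
proof (induction S rule: infinite_finite_induct)
  case (insert x F)
  then have "f x \<in> W" "sum f F \<in> W" by auto
  then have "f x + sum f F \<in> W" using W unfolding subsp_def by blast
  then show ?case by (simp only: sum.insert[OF insert.hyps])
qed (use W in \<open>simp_all add: subsp_def\<close>)

lemma subsp_diff: "subsp W \<Longrightarrow> x \<in> W \<Longrightarrow> y \<in> W \<Longrightarrow> x - y \<in> W"
proof -
  assume s: "subsp W" "x \<in> W" "y \<in> W"
  then have "sv (-1) y \<in> W" unfolding subsp_def by blast
  moreover have "x - y = x + sv (-1) y" by (simp add: fa fun_eq_iff)
  ultimately show ?thesis using s unfolding subsp_def by metis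
qed

fun lapp :: "(('i \<Rightarrow> complex) \<Rightarrow> ('i \<Rightarrow> complex)) \<Rightarrow> complex list \<Rightarrow> ('i \<Rightarrow> complex) \<Rightarrow> ('i \<Rightarrow> complex)" where
  "lapp T [] x = 0"
| "lapp T (a # as) x = sv a x + T (lapp T as x)"

definition papp where "papp T p x = lapp T (coeffs p) x"

lemma papp_0[simp]: "papp T 0 x = 0" by (simp add: papp_def)

lemma papp_pCons: "lin T \<Longrightarrow> papp T (pCons a p) x = sv a x + T (papp T p x)"
proof -
  assume l: "lin T"
  show ?thesis
  proof (cases "p = 0 \<and> a = 0")
    case True then show ?thesis by (simp add: papp_def lin_zero[OF l])
  next
    case False
    then have "coeffs (pCons a p) = a # coeffs p" by (auto simp: cCons_def)
    then show ?thesis by (simp add: papp_def)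
  qed
qed

lemma papp_add: "lin T \<Longrightarrow> papp T (p + q) x = papp T p x + papp T q x"
proof (induction p q rule: poly_induct2)
  case 0 then show ?case by simp
next
  case (pCons a p b q)
  then show ?case by (simp add: papp_pCons lin_add sv_add2 algebra_simps)
qed

lemma papp_smult: "lin T \<Longrightarrow> papp T (smult c p) x = sv c (papp T p x)"
proof (induction p)
  case 0 then show ?case by simp
next
  case (pCons a p)
  then show ?case by (simp add: papp_pCons lin_sv sv_add)
qed

lemma papp_linfac: "lin T \<Longrightarrow> papp T ([:-\<mu>, 1:] * q) x = T (papp T q x) - sv \<mu> (papp T q x)"
proof -
  assume l: "lin T"
  have "[:-\<mu>, 1:] * q = smult (-\<mu>) q + pCons 0 q" by simp
  then have "papp T ([:-\<mu>, 1:] * q) x = sv (-\<mu>) (papp T q x) + (sv 0 x + T (papp T q x))"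
    by (simp only: papp_add[OF l] papp_smult[OF l] papp_pCons[OF l])
  then show ?thesis by (simp add: fa fun_eq_iff)
qed

lemma papp_monom: "lin T \<Longrightarrow> papp T (monom c k) x = sv c ((T ^^ k) x)"
proof (induction k)
  case 0
  have "monom c 0 = pCons c 0" by (simp add: monom_0)
  then show ?case using 0 by (simp add: papp_pCons lin_zero)
next
  case (Suc k)
  then show ?case by (simp add: monom_Suc papp_pCons lin_sv)
qed

lemma papp_sum: "lin T \<Longrightarrow> papp T (sum f S) x = (\<Sum>s\<in>S. papp T (f s) x)"
proof (induction S rule: infinite_finite_induct)
  case (insert y F) then show ?case by (simp add: papp_add)
qed simp_all

lemma papp_in: "lin T \<Longrightarrow> subsp W \<Longrightarrow> (\<forall>x\<in>W. T x \<in> W) \<Longrightarrow> x \<in> W \<Longrightarrow> papp T p x \<in> W"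
proof (induction p)
  case 0 then show ?case by (simp add: subsp_def)
next
  case (pCons a p)
  then show ?case by (simp add: papp_pCons subsp_def)
qed

lemma eigen_from_poly:
  assumes l: "lin T" and W: "subsp W" and inv: "\<forall>x\<in>W. T x \<in> W"
  shows "q \<noteq> 0 \<Longrightarrow> papp T q w = 0 \<Longrightarrow> w \<in> W \<Longrightarrow> w \<noteq> 0 \<Longrightarrow> \<exists>x\<in>W. x \<noteq> 0 \<and> (\<exists>\<mu>. T x = sv \<mu> x)"
proof (induction "degree q" arbitrary: q rule: less_induct)
  case less
  show ?case
  proof (cases "degree q = 0")
    case True
    then obtain c where c: "q = [:c:]" by (metis degree_eq_zeroE)
    then have "c \<noteq> 0" using less by auto
    have "papp T q w = sv c w" unfolding c using papp_pCons[OF l, of c 0 w] by (simp add: lin_zero[OF l])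
    then have "sv (inverse c) (sv c w) = 0" using less by simp
    then have "w = 0" using \<open>c \<noteq> 0\<close> by simp
    then show ?thesis using less by simp
  next
    case False
    then obtain \<mu> where mu: "poly q \<mu> = 0"
      using fundamental_theorem_of_algebra[of q] constant_degree[of q] by auto
    define q1 where "q1 = synthetic_div q \<mu>"
    have qq: "q = [:-\<mu>, 1:] * q1" using synthetic_div_correct'[of \<mu> q] mu by (simp add: q1_def)
    have q1: "q1 \<noteq> 0" using qq less by auto
    have dq: "degree q1 < degree q" using False by (simp add: q1_def degree_synthetic_div)
    define x where "x = papp T q1 w"
    have xW: "x \<in> W" unfolding x_def using papp_in[OF l W inv] less by blast
    show ?thesis
    proof (cases "x = 0")
      case True
      then show ?thesis using less(1)[OF dq q1] less unfolding x_def by blast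
    next
      case False
      have "T x - sv \<mu> x = 0" using less papp_linfac[OF l, of \<mu> q1 w] qq by (simp add: x_def)
      then have "T x = sv \<mu> x" by simp
      then show ?thesis using False xW by blast
    qed
  qed
qed

definition vsupp :: "'i set \<Rightarrow> ('i \<Rightarrow> complex) set" where
  "vsupp B = {x. \<forall>a. a \<notin> B \<longrightarrow> x a = 0}"

definition dlt :: "'i \<Rightarrow> ('i \<Rightarrow> complex)" where
  "dlt b = (\<lambda>a. if a = b then 1 else 0)"

lemma vsupp_expand: "finite B \<Longrightarrow> x \<in> vsupp B \<Longrightarrow> x = (\<Sum>b\<in>B. sv (x b) (dlt b))"
  unfolding vsupp_def dlt_def
  by (auto simp: fa fun_eq_iff sum_fun_apply if_distrib cong: if_cong)

lemma vsupp_span: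
  assumes fin: "finite B"
  obtains g where "\<forall>x\<in>vsupp B. \<exists>a. x = (\<Sum>k<card B. sv (a k) (g k))"
proof -
  obtain e where e: "bij_betw e {0..<card B} B" using ex_bij_betw_nat_finite[OF fin] by blast
  have "\<forall>x\<in>vsupp B. \<exists>a. x = (\<Sum>k<card B. sv (a k) (dlt (e k)))"
  proof
    fix x assume x: "x \<in> vsupp B"
    have "x = (\<Sum>b\<in>B. sv (x b) (dlt b))" by (rule vsupp_expand[OF fin x])
    also have "\<dots> = (\<Sum>k\<in>{0..<card B}. sv (x (e k)) (dlt (e k)))"
      using sum.reindex_bij_betw[OF e, of "\<lambda>b. sv (x b) (dlt b)"] by simp
    finally show "\<exists>a. x = (\<Sum>k<card B. sv (a k) (dlt (e k)))" by (auto simp: atLeast0LessThan)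
  qed
  then show ?thesis by (rule that)
qed

lemma eigen_exists:
  assumes fin: "finite B" and l: "lin T" and W: "subsp W" and WB: "W \<subseteq> vsupp B"
    and inv: "\<forall>x\<in>W. T x \<in> W" and w: "w \<in> W" "w \<noteq> 0"
  shows "\<exists>x\<in>W. x \<noteq> 0 \<and> (\<exists>\<mu>. T x = sv \<mu> x)"
proof -
  define r where "r = card B"
  obtain g where g: "\<forall>x\<in>vsupp B. \<exists>a. x = (\<Sum>k<card B. sv (a k) (g k))" using vsupp_span[OF fin] by blast
  have powW: "\<And>k. (T ^^ k) w \<in> W"
  proof -
    fix k show "(T ^^ k) w \<in> W" by (induction k) (use w inv in auto)
  qed
  have "\<not> (\<forall>c. (\<Sum>k\<in>{..r}. sv (c k) ((T ^^ k) w)) = 0 \<longrightarrow> (\<forall>k\<in>{..r}. c k = 0))"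
  proof
    assume ind: "\<forall>c. (\<Sum>k\<in>{..r}. sv (c k) ((T ^^ k) w)) = 0 \<longrightarrow> (\<forall>k\<in>{..r}. c k = 0)"
    have "card {..r} \<le> r"
    proof (rule fam_bound[where J="{..r}" and f="\<lambda>k. (T ^^ k) w" and g=g and r=r])
      show "\<forall>j\<in>{..r}. \<exists>a. (T ^^ j) w = (\<Sum>k<r. sv (a k) (g k))"
        using g powW WB r_def by blast
    qed (use ind in auto)
    then show False by simp
  qed
  then obtain c where c: "(\<Sum>k\<in>{..r}. sv (c k) ((T ^^ k) w)) = 0" "\<exists>k\<in>{..r}. c k \<noteq> 0" by blast
  define q where "q = (\<Sum>k\<in>{..r}. monom (c k) k)"
  have "q \<noteq> 0"
  proof
    assume "q = 0"
    obtain k where k: "k \<in> {..r}" "c k \<noteq> 0" using c by blast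
    have "coeff q k = (\<Sum>j\<in>{..r}. if k = j then c j else 0)"
      unfolding q_def coeff_sum by (simp add: coeff_monom)
    also have "\<dots> = c k" using k by simp
    finally show False using \<open>q = 0\<close> k by simp
  qed
  moreover have "papp T q w = 0" unfolding q_def using c by (simp add: papp_sum[OF l] papp_monom[OF l])
  ultimately show ?thesis using eigen_from_poly[OF l W inv] w by blast
qed


locale spec =
  fixes B :: "'i set" and G :: "'i cmat" and n :: nat
    and T :: "nat \<Rightarrow> ('i \<Rightarrow> complex) \<Rightarrow> ('i \<Rightarrow> complex)"
  assumes finB: "finite B"
    and herm: "\<forall>a\<in>B. \<forall>b\<in>B. G b a = cnj (G a b)"
    and pos: "\<forall>x. 0 \<le> Re (qf B G x x)"
    and def: "\<forall>x\<in>vsupp B. qf B G x x = 0 \<longrightarrow> x = 0"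
    and linT: "\<forall>i<n. lin (T i)"
    and TV: "\<forall>i<n. \<forall>x. T i x \<in> vsupp B"
    and comm: "\<forall>i<n. \<forall>j<n. \<forall>x. T i (T j x) = T j (T i x)"
    and eigadj: "\<forall>i<n. \<forall>e\<in>vsupp B. \<forall>\<mu>. T i e = sv \<mu> e \<longrightarrow>
                    (\<forall>x\<in>vsupp B. qf B G e (T i x) = \<mu> * qf B G e x)"
begin

abbreviation F where "F \<equiv> qf B G"

lemma Fcnj: "cnj (F x y) = F y x" using qf_cnj[OF herm] .

lemma Freal: "F x x = complex_of_real (Re (F x x))" using qf_real[OF herm] .

lemma subsp_vsupp: "subsp (vsupp B)"
  unfolding subsp_def vsupp_def by (auto simp: fa)

lemma joint_eigen:
  assumes W: "subsp W" "W \<subseteq> vsupp B" "\<forall>i<n. \<forall>x\<in>W. T i x \<in> W" and w: "w \<in> W" "w \<noteq> 0"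
  shows "\<exists>x\<in>W. x \<noteq> 0 \<and> (\<exists>lam. \<forall>i<n. T i x = sv (lam i) x)"
proof -
  have "k \<le> n \<Longrightarrow> \<exists>W'. subsp W' \<and> W' \<subseteq> W \<and> (\<exists>x\<in>W'. x \<noteq> 0) \<and> (\<forall>i<n. \<forall>x\<in>W'. T i x \<in> W')
          \<and> (\<exists>lam. \<forall>i<k. \<forall>x\<in>W'. T i x = sv (lam i) x)" for k
  proof (induction k)
    case 0 then show ?case using W w by blast
  next
    case (Suc k)
    then obtain W' lam where W': "subsp W'" "W' \<subseteq> W" "\<exists>x\<in>W'. x \<noteq> 0" "\<forall>i<n. \<forall>x\<in>W'. T i x \<in> W'"
      "\<forall>i<k. \<forall>x\<in>W'. T i x = sv (lam i) x" by auto
    have k: "k < n" using Suc by simp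
    obtain x0 where x0: "x0 \<in> W'" "x0 \<noteq> 0" using W' by blast
    obtain x \<mu> where x: "x \<in> W'" "x \<noteq> 0" "T k x = sv \<mu> x"
      using eigen_exists[OF finB linT[rule_format, OF k] W'(1) _ _ x0] W'(2,4) W(2) k by blast
    define W'' where "W'' = {y\<in>W'. T k y = sv \<mu> y}"
    have lk: "lin (T k)" using linT k by blast
    have "subsp W''"
      using W'(1) unfolding subsp_def W''_def
      by (auto simp: lin_zero[OF lk] lin_add[OF lk] lin_sv[OF lk] sv_add)
    moreover have "\<forall>i<n. \<forall>y\<in>W''. T i y \<in> W''"
    proof (intro allI impI ballI)
      fix i y assume i: "i < n" and y: "y \<in> W''"
      have "T k (T i y) = T i (T k y)" using comm i k by blast
      also have "\<dots> = sv \<mu> (T i y)" using y linT i by (simp add: W''_def lin_sv)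
      finally show "T i y \<in> W''" using W'(4) i y by (simp add: W''_def)
    qed
    moreover have "\<forall>i<Suc k. \<forall>y\<in>W''. T i y = sv ((lam(k := \<mu>)) i) y"
      using W'(5) by (auto simp: W''_def less_Suc_eq)
    ultimately show ?case using W'(2) x unfolding W''_def by blast
  qed
  from this[OF order_refl] show ?thesis by blast
qed

definition onje :: "(nat \<Rightarrow> ('i \<Rightarrow> complex)) \<Rightarrow> (nat \<Rightarrow> nat \<Rightarrow> complex) \<Rightarrow> nat \<Rightarrow> bool" where
  "onje es lam L \<longleftrightarrow> (\<forall>j<L. es j \<in> vsupp B) \<and> (\<forall>j<L. \<forall>k<L. F (es j) (es k) = (if j = k then 1 else 0))
     \<and> (\<forall>j<L. \<forall>i<n. T i (es j) = sv (lam j i) (es j))"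

lemma onje_bound: assumes "onje es lam L" shows "L \<le> card B"
proof -
  obtain g where g: "\<forall>x\<in>vsupp B. \<exists>a. x = (\<Sum>k<card B. sv (a k) (g k))" using vsupp_span[OF finB] by blast
  have "card {..<L} \<le> card B"
  proof (rule fam_bound[where J="{..<L}" and f=es and g=g and r="card B"])
    show "\<forall>j\<in>{..<L}. \<exists>a. es j = (\<Sum>k<card B. sv (a k) (g k))" using g assms unfolding onje_def by auto
    show "\<forall>c. (\<Sum>j\<in>{..<L}. sv (c j) (es j)) = 0 \<longrightarrow> (\<forall>j\<in>{..<L}. c j = 0)"
    proof (intro allI impI ballI)
      fix c j assume h: "(\<Sum>j\<in>{..<L}. sv (c j) (es j)) = 0" and j: "j \<in> {..<L}"
      have "0 = F (es j) (\<Sum>k\<in>{..<L}. sv (c k) (es k))" using h by simp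
      also have "\<dots> = (\<Sum>k\<in>{..<L}. c k * (if j = k then 1 else 0))"
        using assms j unfolding onje_def by (simp add: qf_sum_right qf_sv_right)
      also have "\<dots> = (\<Sum>k\<in>{..<L}. if j = k then c k else 0)" by (intro sum.cong) auto
      also have "\<dots> = c j" using j by simp
      finally show "c j = 0" by simp
    qed
  qed simp
  then show ?thesis by simp
qed

lemma onje_extend:
  assumes o: "onje es lam L" and x: "x \<in> vsupp B" "x \<noteq> 0" "\<forall>j<L. F (es j) x = 0"
  shows "\<exists>e lam'. onje (es(L := e)) (lam(L := lam')) (Suc L)"
proof -
  define W where "W = {y\<in>vsupp B. \<forall>j<L. F (es j) y = 0}"
  have sW: "subsp W" using subsp_vsupp unfolding W_def subsp_def
    by (auto simp: qf_add_right qf_sv_right)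
  have invW: "\<forall>i<n. \<forall>y\<in>W. T i y \<in> W"
  proof (intro allI impI ballI)
    fix i y assume i: "i < n" and y: "y \<in> W"
    have "\<forall>j<L. F (es j) (T i y) = 0"
    proof (intro allI impI)
      fix j assume j: "j < L"
      have "F (es j) (T i y) = lam j i * F (es j) y"
        using eigadj i o j y unfolding onje_def W_def by blast
      then show "F (es j) (T i y) = 0" using y j unfolding W_def by simp
    qed
    then show "T i y \<in> W" using TV i unfolding W_def by blast
  qed
  obtain z lz where z: "z \<in> W" "z \<noteq> 0" "\<forall>i<n. T i z = sv (lz i) z"
    using joint_eigen[OF sW _ invW, of x] x unfolding W_def by blast
  have zV: "z \<in> vsupp B" using z W_def by blast
  define s where "s = Re (F z z)"
  have "s \<noteq> 0" using def zV z Freal[of z] unfolding s_def by force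
  then have s: "s > 0" using pos[rule_format, of z] unfolding s_def by linarith
  define e where "e = sv (complex_of_real (1 / sqrt s)) z"
  have eV: "e \<in> vsupp B" using zV unfolding e_def vsupp_def by (simp add: fa)
  have ee: "F e e = 1"
  proof -
    have "F e e = complex_of_real (1 / sqrt s) * complex_of_real (1 / sqrt s) * F z z"
      unfolding e_def by (simp add: qf_sv_left qf_sv_right)
    also have "F z z = complex_of_real s" using Freal[of z] s_def by simp
    finally show ?thesis using s by (simp flip: of_real_mult)
  qed
  have ej: "\<forall>j<L. F (es j) e = 0" using z unfolding e_def W_def by (simp add: qf_sv_right)
  have je: "\<forall>j<L. F e (es j) = 0" using ej Fcnj by (metis complex_cnj_zero_iff)
  have eT: "\<forall>i<n. T i e = sv (lz i) e"
    using z linT unfolding e_def by (simp add: lin_sv mult.commute)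
  have "onje (es(L := e)) (lam(L := lz)) (Suc L)"
    using o eV ee ej je eT unfolding onje_def by (auto simp: less_Suc_eq)
  then show ?thesis by blast
qed

lemma onje_complete:
  "\<exists>es lam L. onje es lam L \<and> (\<forall>x\<in>vsupp B. (\<forall>j<L. F (es j) x = 0) \<longrightarrow> x = 0)"
proof -
  have "\<forall>es lam L. card B - L = m \<longrightarrow> onje es lam L \<longrightarrow>
          (\<exists>es lam L. onje es lam L \<and> (\<forall>x\<in>vsupp B. (\<forall>j<L. F (es j) x = 0) \<longrightarrow> x = 0))" for m
  proof (induction m rule: less_induct)
    case (less m)
    show ?case
    proof (intro allI impI)
      fix es lam L assume m: "card B - L = m" and o: "onje es lam L"
      show "\<exists>es lam L. onje es lam L \<and> (\<forall>x\<in>vsupp B. (\<forall>j<L. F (es j) x = 0) \<longrightarrow> x = 0)"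
      proof (cases "\<forall>x\<in>vsupp B. (\<forall>j<L. F (es j) x = 0) \<longrightarrow> x = 0")
        case True then show ?thesis using o by blast
      next
        case False
        then obtain x where "x \<in> vsupp B" "x \<noteq> 0" "\<forall>j<L. F (es j) x = 0" by blast
        then obtain e lam' where o': "onje (es(L := e)) (lam(L := lam')) (Suc L)"
          using onje_extend[OF o] by blast
        have "Suc L \<le> card B" using onje_bound[OF o'] .
        then have "card B - Suc L < m" using m by simp
        then show ?thesis using less o' by blast
      qed
    qed
  qed
  moreover have "onje (\<lambda>_. 0) (\<lambda>_ _. 0) 0" unfolding onje_def by simp
  ultimately show ?thesis by blast
qed

lemma onje_expand:
  assumes o: "onje es lam L" and c: "\<forall>x\<in>vsupp B. (\<forall>j<L. F (es j) x = 0) \<longrightarrow> x = 0"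
    and x: "x \<in> vsupp B"
  shows "x = (\<Sum>j<L. sv (F (es j) x) (es j))"
proof -
  define y where "y = x - (\<Sum>j<L. sv (F (es j) x) (es j))"
  have "y \<in> vsupp B"
  proof -
    have "\<forall>j\<in>{..<L}. sv (F (es j) x) (es j) \<in> vsupp B"
      using o subsp_vsupp unfolding onje_def subsp_def by auto
    then have "(\<Sum>j<L. sv (F (es j) x) (es j)) \<in> vsupp B"
      by (rule subsp_sum[OF subsp_vsupp])
    then show ?thesis using x subsp_diff[OF subsp_vsupp] unfolding y_def by blast
  qed
  moreover have "\<forall>k<L. F (es k) y = 0"
  proof (intro allI impI)
    fix k assume k: "k < L"
    have "F (es k) y = F (es k) x - (\<Sum>j<L. F (es j) x * (if k = j then 1 else 0))"
      using o k unfolding y_def onje_def by (simp add: qf_diff_right qf_sum_right qf_sv_right)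
    also have "(\<Sum>j<L. F (es j) x * (if k = j then 1 else 0)) = (\<Sum>j\<in>{..<L}. if k = j then F (es j) x else 0)"
      by (intro sum.cong) auto
    also have "\<dots> = F (es k) x" using k by simp
    finally show "F (es k) y = 0" by simp
  qed
  ultimately have "y = 0" using c by blast
  then show ?thesis unfolding y_def by simp
qed

lemma onje_card:
  assumes o: "onje es lam L" and c: "\<forall>x\<in>vsupp B. (\<forall>j<L. F (es j) x = 0) \<longrightarrow> x = 0"
  shows "L = card B"
proof -
  have "card B \<le> L"
  proof (rule fam_bound[where J=B and f=dlt and g=es and r=L])
    show "finite B" by (rule finB)
    show "\<forall>j\<in>B. \<exists>a. dlt j = (\<Sum>k<L. sv (a k) (es k))"
    proof
      fix b assume "b \<in> B"
      then have "dlt b \<in> vsupp B" unfolding vsupp_def dlt_def by auto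
      then show "\<exists>a. dlt b = (\<Sum>k<L. sv (a k) (es k))" using onje_expand[OF o c, of "dlt b"] by (intro exI[of _ "\<lambda>j. F (es j) (dlt b)"]) blast
    qed
    show "\<forall>c. (\<Sum>j\<in>B. sv (c j) (dlt j)) = 0 \<longrightarrow> (\<forall>j\<in>B. c j = 0)"
    proof (intro allI impI ballI)
      fix c b assume h: "(\<Sum>j\<in>B. sv (c j) (dlt j)) = 0" and b: "b \<in> B"
      have "(\<Sum>j\<in>B. sv (c j) (dlt j)) b = 0" using h by (simp add: fa)
      then have "(\<Sum>a\<in>B. c a * (if b = a then 1 else 0)) = 0" by (simp add: sum_fun_apply fa dlt_def)
      also have "(\<Sum>a\<in>B. c a * (if b = a then 1 else 0)) = (\<Sum>a\<in>B. if b = a then c a else 0)"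
        by (intro sum.cong) auto
      finally show "c b = 0" using b finB by simp
    qed
  qed
  then show ?thesis using onje_bound[OF o] by simp
qed

end


lemma mult_cnj_norm: "z * cnj z = (complex_of_real (cmod z))\<^sup>2"
  using complex_norm_square[of z] by simp
lemma cnj_mult_norm: "cnj z * z = (complex_of_real (cmod z))\<^sup>2"
  using complex_norm_square[of z] by (simp add: mult.commute)

lemma cplx_quad_zero:
  fixes D :: complex and a :: real
  assumes a: "a \<ge> 0" and h: "\<forall>k. 0 \<le> (cmod k)\<^sup>2 * a + 2 * Re (cnj k * D)"
  shows "D = 0"
proof (rule ccontr)
  assume D: "D \<noteq> 0"
  define k where "k = - D / complex_of_real (a + 1)"
  have a1: "a + 1 > 0" using a by simp
  have "cnj k * D = - complex_of_real ((cmod D)\<^sup>2 / (a + 1))"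
    unfolding k_def using a1 by (simp add: mult_cnj_norm field_simps)
  then have "Re (cnj k * D) = - (cmod D)\<^sup>2 / (a + 1)" by simp
  moreover have "(cmod k)\<^sup>2 = (cmod D)\<^sup>2 / (a + 1)\<^sup>2"
    unfolding k_def using a1 by (simp add: norm_divide power_divide)
  moreover have "\<And>P q::real. q > 0 \<Longrightarrow> P / q\<^sup>2 * a + 2 * (- P / q) = P / q * (a / q - 2)"
    by (simp add: field_simps power2_eq_square)
  ultimately have "(cmod k)\<^sup>2 * a + 2 * Re (cnj k * D) = (cmod D)\<^sup>2 / (a + 1) * (a / (a + 1) - 2)"
    using a1 by metis
  moreover have "a / (a + 1) < 1" using a1 by simp
  moreover have "(cmod D)\<^sup>2 / (a + 1) > 0" using D a1 by simp
  ultimately have "(cmod k)\<^sup>2 * a + 2 * Re (cnj k * D) < 0" by (smt (verit) mult_pos_neg)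
  then show False using h by (meson not_le)
qed

lemma hypo_eigadj:
  fixes B :: "'i set" and G :: "'i cmat"
  assumes herm: "\<forall>a\<in>B. \<forall>b\<in>B. G b a = cnj (G a b)"
    and pos: "\<forall>x. 0 \<le> Re (qf B G x x)"
    and l: "lin T" and TV: "\<forall>x. T x \<in> vsupp B"
    and hyp: "\<forall>x\<in>vsupp B. \<forall>w\<in>vsupp B.
        0 \<le> Re (qf B G x x + qf B G (T x) w + qf B G w (T x) + qf B G (T w) (T w))"
    and e: "e \<in> vsupp B" "T e = sv \<mu> e" and x: "x \<in> vsupp B"
  shows "qf B G e (T x) = \<mu> * qf B G e x"
proof -
  let ?F = "qf B G"
  have Fc: "\<And>u v. cnj (?F u v) = ?F v u" using qf_cnj[OF herm] .
  have Fr: "\<And>u. ?F u u = complex_of_real (Re (?F u u))" using qf_real[OF herm] .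
  define D where "D = (\<lambda>u. ?F (T u) e - cnj \<mu> * ?F u e)"
  have key: "0 \<le> Re (?F u u) + 2 * Re (D u)" if u: "u \<in> vsupp B" for u
  proof -
    define u' where "u' = u - sv (cnj \<mu>) e"
    have u'V: "u' \<in> vsupp B" using u e unfolding u'_def vsupp_def by (simp add: fa)
    have Tu': "T u' = T u - sv (complex_of_real ((cmod \<mu>)\<^sup>2)) e"
      unfolding u'_def using e by (simp add: lin_diff[OF l] lin_sv[OF l] mult_cnj_norm mult.commute)
    have c: "?F e e = complex_of_real (Re (?F e e))" by (rule Fr)
    have 1: "?F u' u' = ?F u u - cnj \<mu> * ?F u e - \<mu> * cnj (?F u e) + complex_of_real ((cmod \<mu>)\<^sup>2) * ?F e e"
      unfolding u'_def by (simp add: qf_diff_left qf_diff_right qf_sv_left qf_sv_right Fc mult_cnj_norm algebra_simps)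
    have 2: "?F (T u') e = ?F (T u) e - complex_of_real ((cmod \<mu>)\<^sup>2) * ?F e e"
      unfolding Tu' by (simp add: qf_diff_left qf_sv_left)
    have 3: "?F e (T u') = cnj (?F (T u) e) - complex_of_real ((cmod \<mu>)\<^sup>2) * ?F e e"
      unfolding Tu' by (simp add: qf_diff_right qf_sv_right Fc)
    have 4: "?F (T e) (T e) = complex_of_real ((cmod \<mu>)\<^sup>2) * ?F e e"
      unfolding e(2) by (simp add: qf_sv_left qf_sv_right mult_cnj_norm mult.assoc[symmetric])
    have "?F u' u' + ?F (T u') e + ?F e (T u') + ?F (T e) (T e) = ?F u u + D u + cnj (D u)"
      unfolding 1 2 3 4 D_def by (simp add: algebra_simps)
    moreover have "Re (?F u u + D u + cnj (D u)) = Re (?F u u) + 2 * Re (D u)" by simp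
    ultimately show ?thesis using hyp u'V e(1) by metis
  qed
  have Dsv: "D (sv k u) = cnj k * D u" for k u
    unfolding D_def by (simp add: lin_sv[OF l] qf_sv_left algebra_simps)
  have "D x = 0"
  proof (rule cplx_quad_zero[where a="Re (?F x x)"])
    show "0 \<le> Re (?F x x)" using pos by blast
    show "\<forall>k. 0 \<le> (cmod k)\<^sup>2 * Re (?F x x) + 2 * Re (cnj k * D x)"
    proof
      fix k
      have kV: "sv k x \<in> vsupp B" using x unfolding vsupp_def by (simp add: fa)
      have "Re (?F (sv k x) (sv k x)) = (cmod k)\<^sup>2 * Re (?F x x)"
        by (simp add: qf_sv_left qf_sv_right mult.assoc[symmetric] complex_norm_square[symmetric] mult.commute)
      then show "0 \<le> (cmod k)\<^sup>2 * Re (?F x x) + 2 * Re (cnj k * D x)"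
        using key[OF kV] Dsv by simp
    qed
  qed
  then have "?F (T x) e = cnj \<mu> * ?F x e" unfolding D_def by simp
  then have "cnj (?F (T x) e) = cnj (cnj \<mu> * ?F x e)" by simp
  then show ?thesis by (simp add: Fc)
qed


declare sv_apply[simp] plus_fun_apply[simp] zero_fun_apply[simp]

lemma gram_psd:
  fixes M :: "'i cmat" and f :: "nat \<Rightarrow> 'i \<Rightarrow> complex"
  assumes rep: "\<forall>a\<in>I. \<forall>b\<in>I. M a b = (\<Sum>j<r. complex_of_real (c j) * cnj (f j a) * f j b)"
    and c: "\<forall>j<r. 0 \<le> c j"
  shows "psd I M"
  unfolding psd_def
proof (intro conjI ballI allI)
  fix a b assume "a \<in> I" "b \<in> I"
  then have "M b a = (\<Sum>j<r. complex_of_real (c j) * cnj (f j b) * f j a)"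
    and "cnj (M a b) = (\<Sum>j<r. complex_of_real (c j) * f j a * cnj (f j b))"
    using rep by (auto simp: cnj_sum)
  then show "M b a = cnj (M a b)" by (simp add: mult.commute mult.left_commute)
next
  fix v
  have "(\<Sum>a\<in>I. \<Sum>b\<in>I. cnj (v a) * M a b * v b)
      = (\<Sum>a\<in>I. \<Sum>b\<in>I. \<Sum>j<r. complex_of_real (c j) * (cnj (f j a * v a) * (f j b * v b)))"
    using rep by (intro sum.cong refl) (simp add: sum_distrib_left sum_distrib_right algebra_simps)
  also have "\<dots> = (\<Sum>j<r. complex_of_real (c j) * (cnj (\<Sum>a\<in>I. f j a * v a) * (\<Sum>b\<in>I. f j b * v b)))"
    by (simp add: sum.swap[of _ I "{..<r}"] sum_distrib_left sum_distrib_right algebra_simps)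
  also have "\<dots> = (\<Sum>j<r. complex_of_real (c j * (cmod (\<Sum>b\<in>I. f j b * v b))\<^sup>2))"
    by (intro sum.cong refl) (simp only: cnj_mult_norm of_real_mult of_real_power)
  finally have "Re (\<Sum>a\<in>I. \<Sum>b\<in>I. cnj (v a) * M a b * v b) = (\<Sum>j<r. c j * (cmod (\<Sum>b\<in>I. f j b * v b))\<^sup>2)"
    by simp
  also have "\<dots> \<ge> 0" using c by (intro sum_nonneg) simp
  finally show "0 \<le> Re (\<Sum>a\<in>I. \<Sum>b\<in>I. cnj (v a) * M a b * v b)" .
qed

lemma psupp_mono_poly: "psupp (mono_poly g d) = {(g, d)}"
  unfolding psupp_def mono_poly_def by auto

lemma loc_mono_poly: "loc_mat (mono_poly g d) y a b = y (madd a g) (madd b d)"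
  unfolding loc_mat_def psupp_mono_poly by (simp add: mono_poly_def)

lemma length_bexp: "length (bexp n i j p) = n"
  unfolding bexp_def by simp

lemma peval_real:
  assumes "real_cpoly n g"
  shows "peval g z \<in> \<real>"
proof -
  have fin: "finite (psupp g)" and h: "\<forall>a b. cnj (g a b) = g b a" using assms unfolding real_cpoly_def by auto
  have sym: "\<And>a b. g a b \<noteq> 0 \<Longrightarrow> g b a \<noteq> 0" using h by (metis complex_cnj_zero_iff)
  have sw: "(\<lambda>(a, b). (b, a)) ` psupp g = psupp g"
    unfolding psupp_def using sym by (auto simp: image_iff)
  have inj: "inj_on (\<lambda>(a, b). (b, a)) (psupp g)" by (auto simp: inj_on_def)
  have "cnj (peval g z) = (\<Sum>(a, b)\<in>psupp g. g b a * zmon z b * cnj (zmon z a))"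
    unfolding peval_def cnj_sum by (intro sum.cong refl) (auto simp: h mult.commute mult.left_commute)
  also have "\<dots> = (\<Sum>(a, b)\<in>(\<lambda>(a, b). (b, a)) ` psupp g. g a b * zmon z a * cnj (zmon z b))"
    by (subst sum.reindex[OF inj]) (simp add: case_prod_beta)
  also have "\<dots> = peval g z" unfolding sw peval_def ..
  finally show ?thesis by (metis Reals_cnj_iff)
qed

lemma loc_eval:
  assumes g: "real_cpoly n g" and z: "length z = n" and a: "length a = n" and b: "length b = n"
  shows "(\<Sum>(ga, gb)\<in>psupp g. g ga gb * (zmon z (madd a ga) * cnj (zmon z (madd b gb))))
       = peval g z * zmon z a * cnj (zmon z b)"
proof -
  have l: "\<forall>(ga, gb)\<in>psupp g. length ga = n \<and> length gb = n" using g unfolding real_cpoly_def by auto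
  show ?thesis unfolding peval_def sum_distrib_right
    by (intro sum.cong refl) (use l a b in \<open>auto simp: zmon_madd algebra_simps\<close>)
qed

lemma forward:
  fixes n d m :: nat and y :: cpoly and g :: "nat \<Rightarrow> cpoly" and N :: nat
  assumes gr: "\<forall>i<m. real_cpoly n (g i)" and dN: "d \<le> N"
    and ar: "atomic_repr n d (Kset n m g) (mrank (midx n d) (mom_mat y)) y"
  shows "\<exists>y' :: cpoly.
       (\<forall>\<alpha>\<in>midx n d. \<forall>\<beta>\<in>midx n d. y' \<alpha> \<beta> = y \<alpha> \<beta>)
     \<and> psd (midx n N) (mom_mat y')
     \<and> (\<forall>i<m. \<forall>s. psd (midx n s) (loc_mat (g i) y'))
     \<and> mrank (midx n N) (mom_mat y') = mrank (midx n d) (mom_mat y)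
     \<and> (\<forall>i j. psd ({0, 1, 2} \<times> midx n d) (block_mat n i j y'))"
proof -
  define r where "r = mrank (midx n d) (mom_mat y)"
  obtain pts :: "complex list list" and w :: "nat \<Rightarrow> real" where
    P: "length pts = r" "distinct pts" "\<forall>j<r. pts ! j \<in> Kset n m g \<and> 0 < w j"
      "\<forall>\<alpha>\<in>midx n d. \<forall>\<beta>\<in>midx n d. y \<alpha> \<beta> = (\<Sum>j<r. complex_of_real (w j) * zmon (pts ! j) \<alpha> * cnj (zmon (pts ! j) \<beta>))"
    using ar unfolding atomic_repr_def r_def by blast
  define y' :: cpoly where "y' = (\<lambda>\<alpha> \<beta>. \<Sum>j<r. complex_of_real (w j) * zmon (pts ! j) \<alpha> * cnj (zmon (pts ! j) \<beta>))"
  have lp: "\<forall>j<r. length (pts ! j) = n" using P(3) unfolding Kset_def by auto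
  have agree: "\<forall>\<alpha>\<in>midx n d. \<forall>\<beta>\<in>midx n d. y' \<alpha> \<beta> = y \<alpha> \<beta>" using P(4) unfolding y'_def by simp
  have psdM: "psd I (mom_mat y')" for I
    by (rule gram_psd[where f="\<lambda>j a. cnj (zmon (pts ! j) a)" and c=w and r=r])
       (use P(3) in \<open>auto simp: mom_mat_def y'_def less_imp_le\<close>)
  have psdL: "psd (midx n s) (loc_mat (g i) y')" if i: "i < m" for i s
  proof (rule gram_psd[where f="\<lambda>j a. cnj (zmon (pts ! j) a)" and c="\<lambda>j. w j * Re (peval (g i) (pts ! j))" and r=r])
    show "\<forall>j<r. 0 \<le> w j * Re (peval (g i) (pts ! j))"
      using P(3) i unfolding Kset_def by (auto intro: less_imp_le)
    show "\<forall>a\<in>midx n s. \<forall>b\<in>midx n s. loc_mat (g i) y' a b =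
        (\<Sum>j<r. complex_of_real (w j * Re (peval (g i) (pts ! j))) * cnj (cnj (zmon (pts ! j) a)) * cnj (zmon (pts ! j) b))"
    proof (intro ballI)
      fix a b assume a: "a \<in> midx n s" and b: "b \<in> midx n s"
      have "loc_mat (g i) y' a b = (\<Sum>j<r. complex_of_real (w j) *
          (\<Sum>(ga, gb)\<in>psupp (g i). g i ga gb * (zmon (pts ! j) (madd a ga) * cnj (zmon (pts ! j) (madd b gb)))))"
        unfolding loc_mat_def y'_def
        by (simp add: sum_distrib_left sum.swap[of _ "psupp (g i)"] case_prod_beta algebra_simps)
      also have "\<dots> = (\<Sum>j<r. complex_of_real (w j) * (peval (g i) (pts ! j) * zmon (pts ! j) a * cnj (zmon (pts ! j) b)))"
        using loc_eval[OF gr[rule_format, OF i]] lp a b unfolding midx_def by (intro sum.cong refl) auto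
      also have "\<dots> = (\<Sum>j<r. complex_of_real (w j * Re (peval (g i) (pts ! j))) * cnj (cnj (zmon (pts ! j) a)) * cnj (zmon (pts ! j) b))"
      proof (intro sum.cong refl)
        fix j
        have "peval (g i) (pts ! j) = complex_of_real (Re (peval (g i) (pts ! j)))"
          using peval_real[OF gr[rule_format, OF i]] by (simp add: complex_is_Real_iff complex_eq_iff)
        then show "complex_of_real (w j) * (peval (g i) (pts ! j) * zmon (pts ! j) a * cnj (zmon (pts ! j) b)) =
          complex_of_real (w j * Re (peval (g i) (pts ! j))) * cnj (cnj (zmon (pts ! j) a)) * cnj (zmon (pts ! j) b)"
          by (metis (no_types, lifting) complex_cnj_cnj mult.assoc of_real_mult)
      qed
      finally show "loc_mat (g i) y' a b = (\<Sum>j<r. complex_of_real (w j * Re (peval (g i) (pts ! j))) * cnj (cnj (zmon (pts ! j) a)) * cnj (zmon (pts ! j) b))" .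
    qed
  qed
  have psdB: "psd ({0, 1, 2} \<times> midx n d) (block_mat n i j y')" for i j
  proof (rule gram_psd[where f="\<lambda>k (p, a). cnj (zmon (pts ! k) a) * zmon (pts ! k) (bexp n i j p)" and c=w and r=r])
    show "\<forall>k<r. 0 \<le> w k" using P(3) by (auto intro: less_imp_le)
    show "\<forall>pa\<in>{0, 1, 2} \<times> midx n d. \<forall>qb\<in>{0, 1, 2} \<times> midx n d. block_mat n i j y' pa qb =
        (\<Sum>k<r. complex_of_real (w k) * cnj (case pa of (p, a) \<Rightarrow> cnj (zmon (pts ! k) a) * zmon (pts ! k) (bexp n i j p)) *
          (case qb of (p, a) \<Rightarrow> cnj (zmon (pts ! k) a) * zmon (pts ! k) (bexp n i j p)))"
    proof (intro ballI)
      fix pa qb :: "nat \<times> nat list" assume pa: "pa \<in> {0, 1, 2} \<times> midx n d" and qb: "qb \<in> {0, 1, 2} \<times> midx n d"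
      obtain p a q b where pq: "pa = (p, a)" "qb = (q, b)" by fastforce
      have la: "length a = n" "length b = n" using pa qb pq unfolding midx_def by auto
      show "block_mat n i j y' pa qb = (\<Sum>k<r. complex_of_real (w k) * cnj (case pa of (p, a) \<Rightarrow> cnj (zmon (pts ! k) a) * zmon (pts ! k) (bexp n i j p)) *
          (case qb of (p, a) \<Rightarrow> cnj (zmon (pts ! k) a) * zmon (pts ! k) (bexp n i j p)))"
        unfolding pq block_mat_def loc_mono_poly y'_def
        using la by (auto simp: zmon_madd length_bexp algebra_simps intro!: sum.cong)
    qed
  qed
  have rk: "mrank (midx n N) (mom_mat y') = r"
  proof (rule antisym)
    show "mrank (midx n N) (mom_mat y') \<le> r"
      by (rule mrank_le_span[where f="\<lambda>k a. complex_of_real (w k) * zmon (pts ! k) a" and h="\<lambda>k b. cnj (zmon (pts ! k) b)"])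
         (auto simp: finite_midx mom_mat_def y'_def)
    obtain J where J: "J \<subseteq> midx n d" "cols_indep (midx n d) J (mom_mat y)" "card J = r"
      using mrank_ex[OF finite_midx] r_def by blast
    have ci: "cols_indep (midx n N) J (mom_mat y')"
      by (rule cols_indep_rows[OF J(2) midx_mono[OF dN]]) (use J(1) agree in \<open>auto simp: mom_mat_def\<close>)
    have "J \<subseteq> midx n N" using J(1) midx_mono[OF dN] by blast
    from mrank_ge[OF finite_midx this ci] show "r \<le> mrank (midx n N) (mom_mat y')"
      using J(3) by simp
  qed
  show ?thesis using agree psdM psdL rk psdB r_def by blast
qed


lemma psupp_ball:
  assumes R: "R > 0"
  shows "psupp (ball_poly n R) = insert (mzero n, mzero n) ((\<lambda>k. (munit n k, munit n k)) ` {..<n})"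
  unfolding psupp_def ball_poly_def using R mzero_ne_munit by (auto split: if_splits)

lemma loc_ball:
  assumes R: "R > 0"
  shows "loc_mat (ball_poly n R) y a b = complex_of_real (R\<^sup>2) * y (madd a (mzero n)) (madd b (mzero n))
      - (\<Sum>k<n. y (madd a (munit n k)) (madd b (munit n k)))"
proof -
  have ni: "(mzero n, mzero n) \<notin> (\<lambda>k. (munit n k, munit n k)) ` {..<n}" using mzero_ne_munit by auto
  have inj: "inj_on (\<lambda>k. (munit n k, munit n k)) {..<n}" using munit_inj by (auto simp: inj_on_def)
  have m: "k < n \<Longrightarrow> ball_poly n R (munit n k) (munit n k) = -1" for k
    unfolding ball_poly_def using mzero_ne_munit by auto
  have m0: "ball_poly n R (mzero n) (mzero n) = complex_of_real (R\<^sup>2)" unfolding ball_poly_def by simp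
  have s: "(\<Sum>k<n. ball_poly n R (munit n k) (munit n k) * y (madd a (munit n k)) (madd b (munit n k)))
     = (\<Sum>k<n. - y (madd a (munit n k)) (madd b (munit n k)))"
    by (intro sum.cong) (auto simp: m)
  show ?thesis
    unfolding loc_mat_def psupp_ball[OF R]
    by (simp add: sum.insert[OF _ ni] sum.reindex[OF inj] s sum_negf m0)
qed

lemma pdeg_ball: assumes R: "R > 0" shows "pdeg (ball_poly n R) \<le> 1"
proof -
  define S where "S = {max (mdeg \<alpha>) (mdeg \<beta>) | \<alpha> \<beta>. ball_poly n R \<alpha> \<beta> \<noteq> 0}"
  have S1: "\<forall>x\<in>S. x \<le> 1"
  proof
    fix x assume "x \<in> S"
    then obtain \<alpha> \<beta> where x: "x = max (mdeg \<alpha>) (mdeg \<beta>)" "ball_poly n R \<alpha> \<beta> \<noteq> 0"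
      unfolding S_def by blast
    show "x \<le> 1"
    proof (cases "\<alpha> = mzero n \<and> \<beta> = mzero n")
      case True then show ?thesis using x by simp
    next
      case False
      then have "\<exists>k<n. \<alpha> = munit n k \<and> \<beta> = munit n k" using x(2) unfolding ball_poly_def by (auto split: if_splits)
      then show ?thesis using x mdeg_munit by auto
    qed
  qed
  have fin: "finite ({0} \<union> S)"
  proof -
    have "{0} \<union> S \<subseteq> {0..1}" using S1 by auto
    then show ?thesis using finite_subset by blast
  qed
  have "Max ({0} \<union> S) \<le> 1" using S1 fin by (subst Max_le_iff) auto
  then show ?thesis unfolding pdeg_def S_def .
qed

lemma qf_restrict:
  assumes "finite I" "B \<subseteq> I" "v \<in> vsupp B" "w \<in> vsupp B"
  shows "qf I M v w = qf B M v w"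
proof -
  have fB: "finite B" using assms finite_subset by blast
  have "qf I M v w = (\<Sum>a\<in>I. \<Sum>b\<in>B. cnj (v a) * M a b * w b)"
    unfolding qf_def using assms by (intro sum.cong refl sum.mono_neutral_right) (auto simp: vsupp_def)
  also have "\<dots> = (\<Sum>a\<in>B. \<Sum>b\<in>B. cnj (v a) * M a b * w b)"
    using assms by (intro sum.mono_neutral_right) (auto simp: vsupp_def)
  finally show ?thesis unfolding qf_def .
qed

lemma psd_mono: assumes "psd I M" "J \<subseteq> I" "finite I" shows "psd J M"
  unfolding psd_def
proof (intro conjI ballI allI)
  fix a b assume "a \<in> J" "b \<in> J"
  then have "a \<in> I" "b \<in> I" using assms(2) by auto
  then show "M b a = cnj (M a b)" by (rule psd_herm[OF assms(1)])
next
  fix v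
  define v' where "v' = (\<lambda>a. if a \<in> J then v a else (0::complex))"
  have v'J: "v' \<in> vsupp J" unfolding vsupp_def v'_def by simp
  have "qf I M v' v' = qf J M v' v'" by (rule qf_restrict[OF assms(3,2) v'J v'J])
  also have "\<dots> = qf J M v v" by (rule qf_cong) (auto simp: v'_def)
  finally show "0 \<le> Re (\<Sum>a\<in>J. \<Sum>b\<in>J. cnj (v a) * M a b * v b)"
    using psd_qf[OF assms(1), of v'] unfolding qf_def by simp
qed

lemma vsum_restrict:
  assumes "finite I" "B \<subseteq> I" "v \<in> vsupp B"
  shows "(\<Sum>a\<in>I. sv (v a) (h a)) = (\<Sum>a\<in>B. sv (v a) (h a))"
  using assms
  by (intro sum.mono_neutral_right) (auto simp: vsupp_def fun_eq_iff intro: finite_subset[of B I])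


lemma subsp_vsupp_g: "subsp (vsupp B)"
  unfolding subsp_def vsupp_def by auto

lemma mom_eq[simp]: "mom_mat y = y" by (simp add: mom_mat_def fun_eq_iff)

locale bwd =
  fixes n d N :: nat and y' :: cpoly and B :: "nat list set" and R :: real
  assumes BD: "B \<subseteq> midx n d" and dN: "d + 2 \<le> N"
    and psdN: "psd (midx n N) y'"
    and indB: "cols_indep (midx n N) B y'"
    and spanN: "\<forall>a\<in>midx n N. \<exists>c. \<forall>x\<in>midx n N. y' x a = (\<Sum>b\<in>B. y' x b * c b)"
    and R: "R > 0"
    and ball: "psd (midx n (N - 1)) (loc_mat (ball_poly n R) y')"
begin

abbreviation "IN \<equiv> midx n N"
abbreviation "F \<equiv> qf B y'"

lemma BN: "B \<subseteq> IN" using BD midx_mono[of d N n] dN by auto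
lemma finB: "finite B" using BD finite_midx finite_subset by blast
lemma herm: "\<forall>a\<in>IN. \<forall>b\<in>IN. y' b a = cnj (y' a b)" using psd_herm[OF psdN] by blast
lemma hermB: "\<forall>a\<in>B. \<forall>b\<in>B. y' b a = cnj (y' a b)" using herm BN by blast

definition Cf :: "nat list \<Rightarrow> nat list \<Rightarrow> complex" where
  "Cf a = (\<lambda>b. if b \<in> B then (SOME c. \<forall>x\<in>IN. y' x a = (\<Sum>b\<in>B. y' x b * c b)) b else 0)"

lemma Cf_col: assumes a: "a \<in> IN" shows "\<forall>x\<in>IN. y' x a = (\<Sum>b\<in>B. y' x b * Cf a b)"
proof -
  have "\<exists>c. \<forall>x\<in>IN. y' x a = (\<Sum>b\<in>B. y' x b * c b)" using spanN a by blast
  then have "\<forall>x\<in>IN. y' x a = (\<Sum>b\<in>B. y' x b * (SOME c. \<forall>x\<in>IN. y' x a = (\<Sum>b\<in>B. y' x b * c b)) b)"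
    by (rule someI_ex)
  then show ?thesis unfolding Cf_def by (simp cong: sum.cong)
qed

lemma Cf_V: "Cf a \<in> vsupp B" unfolding Cf_def vsupp_def by simp

lemma indB': "\<forall>x\<in>IN. (\<Sum>b\<in>B. y' x b * c b) = 0 \<Longrightarrow> \<forall>b\<in>B. c b = 0"
  using indB unfolding cols_indep_def by blast

lemma dlt_sum: assumes "finite S" "b \<in> S" shows "(\<Sum>b'\<in>S. f b' * dlt b b') = f b"
proof -
  have "(\<Sum>b'\<in>S. f b' * dlt b b') = (\<Sum>b'\<in>S. if b' = b then f b' else 0)"
    by (intro sum.cong) (auto simp: dlt_def)
  then show ?thesis using assms by simp
qed

lemma dlt_sum2: assumes "finite S" "b \<in> S" shows "(\<Sum>b'\<in>S. dlt b b' * f b') = f b"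
  using dlt_sum[OF assms, of f] by (simp add: mult.commute)

lemma Cf_B: assumes b: "b \<in> B" shows "Cf b = dlt b"
proof -
  have bN: "b \<in> IN" using b BN by auto
  have "\<forall>x\<in>IN. (\<Sum>b'\<in>B. y' x b' * (Cf b b' - dlt b b')) = 0"
  proof
    fix x assume x: "x \<in> IN"
    have "(\<Sum>b'\<in>B. y' x b' * (Cf b b' - dlt b b')) = (\<Sum>b'\<in>B. y' x b' * Cf b b') - (\<Sum>b'\<in>B. y' x b' * dlt b b')"
      by (simp add: algebra_simps sum_subtractf)
    also have "\<dots> = 0" using Cf_col[OF bN] x dlt_sum[OF finB b] by simp
    finally show "(\<Sum>b'\<in>B. y' x b' * (Cf b b' - dlt b b')) = 0" .
  qed
  then have "\<forall>b'\<in>B. Cf b b' = dlt b b'" using indB'[of "\<lambda>b'. Cf b b' - dlt b b'"] by simp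
  moreover have "\<forall>b'. b' \<notin> B \<longrightarrow> Cf b b' = dlt b b'" using b unfolding Cf_def dlt_def by auto
  ultimately show ?thesis by (auto simp: fun_eq_iff)
qed

lemma Y: assumes a: "a \<in> IN" and b: "b \<in> IN" shows "y' a b = F (Cf a) (Cf b)"
proof -
  have "F (Cf a) (Cf b) = (\<Sum>a'\<in>B. cnj (Cf a a') * (\<Sum>b'\<in>B. y' a' b' * Cf b b'))"
    unfolding qf_def by (simp add: sum_distrib_left mult.assoc)
  also have "\<dots> = (\<Sum>a'\<in>B. cnj (Cf a a') * y' a' b)"
    using Cf_col[OF b] BN by (intro sum.cong refl) auto
  also have "\<dots> = (\<Sum>a'\<in>B. cnj (y' b a' * Cf a a'))"
    using herm BN b by (intro sum.cong refl) (auto simp: mult.commute)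
  also have "\<dots> = cnj (y' b a)" using Cf_col[OF a] b by (simp add: cnj_sum)
  also have "\<dots> = y' a b" using herm a b by (metis complex_cnj_cnj)
  finally show ?thesis ..
qed

lemma pos: "0 \<le> Re (F x x)"
  using psd_qf[OF psd_mono[OF psdN BN finite_midx]] .

lemma def: assumes x: "x \<in> vsupp B" and z: "F x x = 0" shows "x = 0"
proof -
  have "qf IN y' x x = 0" using qf_restrict[OF finite_midx BN x x] z by simp
  then have k: "\<forall>a\<in>IN. (\<Sum>b\<in>IN. y' a b * x b) = 0" using psd_kernel[OF psdN finite_midx] by simp
  have "\<forall>a\<in>IN. (\<Sum>b\<in>B. y' a b * x b) = 0"
  proof
    fix a assume a: "a \<in> IN"
    have "(\<Sum>b\<in>IN. y' a b * x b) = (\<Sum>b\<in>B. y' a b * x b)"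
      using x BN by (intro sum.mono_neutral_right finite_midx) (auto simp: vsupp_def)
    then show "(\<Sum>b\<in>B. y' a b * x b) = 0" using k a by simp
  qed
  then have "\<forall>b\<in>B. x b = 0" using indB' by blast
  then show ?thesis using x unfolding vsupp_def by (auto simp: fun_eq_iff)
qed

definition Top :: "nat \<Rightarrow> (nat list \<Rightarrow> complex) \<Rightarrow> (nat list \<Rightarrow> complex)" where
  "Top i x = (\<Sum>b\<in>B. sv (x b) (Cf (madd b (munit n i))))"

lemma lin_Top: "lin (Top i)"
  unfolding lin_def Top_def
  by (auto simp: fun_eq_iff sum_fun_apply algebra_simps sum.distrib sum_distrib_left)

lemma Top_V: "Top i x \<in> vsupp B"
  unfolding Top_def using Cf_V by (intro subsp_sum[OF subsp_vsupp_g]) (auto simp: subsp_vsupp_g[unfolded subsp_def])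

lemma SF:
  assumes fin: "finite I" and g: "\<forall>a\<in>I. madd a ga \<in> IN" and h: "\<forall>b\<in>I. madd b gb \<in> IN"
  shows "(\<Sum>a\<in>I. \<Sum>b\<in>I. cnj (v a) * y' (madd a ga) (madd b gb) * v b)
     = F (\<Sum>a\<in>I. sv (v a) (Cf (madd a ga))) (\<Sum>b\<in>I. sv (v b) (Cf (madd b gb)))"
  unfolding qf_sum_left unfolding qf_sum_right qf_sv_left qf_sv_right sum_distrib_left
  using g h by (intro sum.cong refl) (simp add: Y mult.commute mult.left_commute)

lemma vcomb:
  assumes J: "finite J" "B \<subseteq> J" "a \<in> J"
  shows "(\<Sum>\<alpha>\<in>J. sv ((dlt a - (\<Sum>b\<in>B. sv (Cf a b) (dlt b))) \<alpha>) (h \<alpha>)) = h a - (\<Sum>b\<in>B. sv (Cf a b) (h b))"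
proof (rule ext)
  fix x
  have "(\<Sum>\<alpha>\<in>J. sv ((dlt a - (\<Sum>b\<in>B. sv (Cf a b) (dlt b))) \<alpha>) (h \<alpha>)) x
      = (\<Sum>\<alpha>\<in>J. sv ((dlt a - (\<Sum>b\<in>B. sv (Cf a b) (dlt b))) \<alpha>) (h \<alpha>) x)" by (simp only: sum_fun_apply)
  also have "\<dots> = (\<Sum>\<alpha>\<in>J. dlt a \<alpha> * h \<alpha> x - (\<Sum>b\<in>B. Cf a b * (dlt b \<alpha> * h \<alpha> x)))"
    by (intro sum.cong refl) (simp add: sum_fun_apply sum_distrib_left sum_distrib_right algebra_simps)
  also have "\<dots> = (\<Sum>\<alpha>\<in>J. dlt a \<alpha> * h \<alpha> x) - (\<Sum>\<alpha>\<in>J. \<Sum>b\<in>B. Cf a b * (dlt b \<alpha> * h \<alpha> x))"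
    by (simp only: sum_subtractf)
  also have "(\<Sum>\<alpha>\<in>J. \<Sum>b\<in>B. Cf a b * (dlt b \<alpha> * h \<alpha> x)) = (\<Sum>b\<in>B. Cf a b * (\<Sum>\<alpha>\<in>J. dlt b \<alpha> * h \<alpha> x))"
    by (simp only: sum.swap[of _ J] sum_distrib_left)
  also have "\<dots> = (\<Sum>b\<in>B. Cf a b * h b x)"
    using J by (intro sum.cong refl) (auto simp: dlt_sum2)
  also have "(\<Sum>\<alpha>\<in>J. dlt a \<alpha> * h \<alpha> x) = h a x" using J by (simp add: dlt_sum2)
  finally show "(\<Sum>\<alpha>\<in>J. sv ((dlt a - (\<Sum>b\<in>B. sv (Cf a b) (dlt b))) \<alpha>) (h \<alpha>)) x
      = (h a - (\<Sum>b\<in>B. sv (Cf a b) (h b))) x" by (simp add: sum_fun_apply)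
qed

end


context bwd begin

lemma Cf_expand: "(\<Sum>b\<in>B. sv (x b) (dlt b)) = x" if "x \<in> vsupp B"
  using vsupp_expand[OF finB that] by simp

lemma SC: assumes a: "a \<in> midx n (N - 1)" and k: "k < n"
  shows "Cf (madd a (munit n k)) = Top k (Cf a)"
proof -
  define J where "J = midx n (N - 1)"
  have finJ: "finite J" unfolding J_def by (rule finite_midx)
  have "d \<le> N - 1" using dN by simp
  then have BJ: "B \<subseteq> J" unfolding J_def using BD midx_mono[of d "N - 1" n] by blast
  have aJ: "a \<in> J" using a J_def by simp
  have lenJ: "\<And>\<alpha>. \<alpha> \<in> J \<Longrightarrow> length \<alpha> = n" unfolding J_def midx_def by auto
  have JN: "\<And>\<alpha>. \<alpha> \<in> J \<Longrightarrow> \<alpha> \<in> IN" unfolding J_def using midx_mono[of "N - 1" N n] by auto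
  have JNk: "\<And>\<alpha> k'. \<alpha> \<in> J \<Longrightarrow> k' < n \<Longrightarrow> madd \<alpha> (munit n k') \<in> IN"
    unfolding J_def using dN by (intro midx_madd[where s="N - 1"]) (auto simp: mdeg_munit)
  define v where "v = dlt a - (\<Sum>b\<in>B. sv (Cf a b) (dlt b))"
  define V where "V = (\<lambda>k'. Cf (madd a (munit n k')) - Top k' (Cf a))"
  have V0: "(\<Sum>\<alpha>\<in>J. sv (v \<alpha>) (Cf (madd \<alpha> (mzero n)))) = 0"
  proof -
    have "(\<Sum>\<alpha>\<in>J. sv (v \<alpha>) (Cf (madd \<alpha> (mzero n)))) = Cf (madd a (mzero n)) - (\<Sum>b\<in>B. sv (Cf a b) (Cf (madd b (mzero n))))"
      unfolding v_def by (rule vcomb[OF finJ BJ aJ])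
    also have "\<dots> = Cf a - (\<Sum>b\<in>B. sv (Cf a b) (dlt b))"
      using lenJ[OF aJ] BJ lenJ Cf_B by (auto intro!: sum.cong)
    also have "\<dots> = 0" using Cf_expand[OF Cf_V] by simp
    finally show ?thesis .
  qed
  have Vk: "(\<Sum>\<alpha>\<in>J. sv (v \<alpha>) (Cf (madd \<alpha> (munit n k')))) = V k'" for k'
    unfolding v_def V_def Top_def by (rule vcomb[OF finJ BJ aJ])
  define Y0 where "Y0 = (\<lambda>\<alpha> \<beta>. y' (madd \<alpha> (mzero n)) (madd \<beta> (mzero n)))"
  define Yk where "Yk = (\<lambda>k' \<alpha> \<beta>. y' (madd \<alpha> (munit n k')) (madd \<beta> (munit n k')))"
  have "qf J (loc_mat (ball_poly n R) y') v v
      = (\<Sum>\<alpha>\<in>J. \<Sum>\<beta>\<in>J. complex_of_real (R\<^sup>2) * (cnj (v \<alpha>) * Y0 \<alpha> \<beta> * v \<beta>) - (\<Sum>k'<n. cnj (v \<alpha>) * Yk k' \<alpha> \<beta> * v \<beta>))"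
    unfolding qf_def loc_ball[OF R] Y0_def Yk_def
    by (intro sum.cong refl) (simp add: algebra_simps sum_distrib_left sum_distrib_right)
  also have "\<dots> = complex_of_real (R\<^sup>2) * (\<Sum>\<alpha>\<in>J. \<Sum>\<beta>\<in>J. cnj (v \<alpha>) * Y0 \<alpha> \<beta> * v \<beta>)
      - (\<Sum>k'<n. \<Sum>\<alpha>\<in>J. \<Sum>\<beta>\<in>J. cnj (v \<alpha>) * Yk k' \<alpha> \<beta> * v \<beta>)"
  proof -
    let ?Z = "\<lambda>k' \<alpha> \<beta>. cnj (v \<alpha>) * Yk k' \<alpha> \<beta> * v \<beta>"
    have "(\<Sum>\<alpha>\<in>J. \<Sum>\<beta>\<in>J. \<Sum>k'<n. ?Z k' \<alpha> \<beta>) = (\<Sum>\<alpha>\<in>J. \<Sum>k'<n. \<Sum>\<beta>\<in>J. ?Z k' \<alpha> \<beta>)"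
      by (intro sum.cong refl) (rule sum.swap)
    also have "\<dots> = (\<Sum>k'<n. \<Sum>\<alpha>\<in>J. \<Sum>\<beta>\<in>J. ?Z k' \<alpha> \<beta>)" by (rule sum.swap)
    finally have sw: "(\<Sum>\<alpha>\<in>J. \<Sum>\<beta>\<in>J. \<Sum>k'<n. ?Z k' \<alpha> \<beta>) = (\<Sum>k'<n. \<Sum>\<alpha>\<in>J. \<Sum>\<beta>\<in>J. ?Z k' \<alpha> \<beta>)" .
    show ?thesis by (simp only: sum_subtractf sum_distrib_left sw)
  qed
  also have "(\<Sum>\<alpha>\<in>J. \<Sum>\<beta>\<in>J. cnj (v \<alpha>) * Y0 \<alpha> \<beta> * v \<beta>) = 0"
  proof -
    have "(\<Sum>\<alpha>\<in>J. sv (v \<alpha>) (Cf \<alpha>)) = (\<Sum>\<alpha>\<in>J. sv (v \<alpha>) (Cf (madd \<alpha> (mzero n))))"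
      using lenJ by (intro sum.cong) auto
    then have V0': "(\<Sum>\<alpha>\<in>J. sv (v \<alpha>) (Cf \<alpha>)) = 0" using V0 by simp
    have "(\<Sum>\<alpha>\<in>J. \<Sum>\<beta>\<in>J. cnj (v \<alpha>) * Y0 \<alpha> \<beta> * v \<beta>) = F (\<Sum>\<alpha>\<in>J. sv (v \<alpha>) (Cf \<alpha>)) (\<Sum>\<alpha>\<in>J. sv (v \<alpha>) (Cf \<alpha>))"
      unfolding Y0_def using lenJ JN by (subst SF[OF finJ]) auto
    also have "\<dots> = F 0 0" by (simp only: V0')
    finally show ?thesis by (simp only: qf_zero_left)
  qed
  also have "(\<Sum>k'<n. \<Sum>\<alpha>\<in>J. \<Sum>\<beta>\<in>J. cnj (v \<alpha>) * Yk k' \<alpha> \<beta> * v \<beta>) = (\<Sum>k'<n. F (V k') (V k'))"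
    unfolding Yk_def by (intro sum.cong refl) (simp add: SF[OF finJ] JNk Vk)
  finally have form: "qf J (loc_mat (ball_poly n R) y') v v = - (\<Sum>k'<n. F (V k') (V k'))" by simp
  have psdJ: "psd J (loc_mat (ball_poly n R) y')" using ball J_def by simp
  have "0 \<le> Re (qf J (loc_mat (ball_poly n R) y') v v)" by (rule psd_qf[OF psdJ])
  then have "(\<Sum>k'<n. Re (F (V k') (V k'))) \<le> 0" unfolding form by simp
  then have "\<forall>k'\<in>{..<n}. Re (F (V k') (V k')) = 0"
    using pos by (subst sum_nonneg_eq_0_iff[symmetric]) (auto intro: sum_nonneg antisym)
  then have "Re (F (V k) (V k)) = 0" using k by simp
  then have "F (V k) (V k) = 0" using qf_real[OF hermB, of "V k"] by simp
  moreover have "V k \<in> vsupp B" unfolding V_def using Cf_V Top_V subsp_diff[OF subsp_vsupp_g] by blast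
  ultimately have "V k = 0" using def by blast
  then show ?thesis unfolding V_def by simp
qed

end


lemma mdeg_munit_le: "mdeg (munit n i) \<le> 1"
proof -
  have "mdeg (munit n i) = (\<Sum>k<n. if k = i then 1 else 0)"
    unfolding mdeg_def munit_def by (simp add: sum_list_sum_nth atLeast0LessThan)
  also have "\<dots> \<le> 1" by (cases "i < n") auto
  finally show ?thesis .
qed

lemma sum_prod2: "(\<Sum>z\<in>A \<times> C. f z) = (\<Sum>p\<in>A. \<Sum>a\<in>C. f (p, a))"
  by (simp add: sum.cartesian_product)

context bwd begin

lemma Top_expand: "Top i x = (\<Sum>b\<in>B. sv (x b) (Cf (madd b (munit n i))))" by (simp add: Top_def)

lemma comm: assumes i: "i < n" and j: "j < n" shows "Top i (Top j x) = Top j (Top i x)"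
proof -
  have lb: "\<And>b. b \<in> B \<Longrightarrow> length b = n" using BD unfolding midx_def by auto
  have sh: "\<And>b j. b \<in> B \<Longrightarrow> j < n \<Longrightarrow> madd b (munit n j) \<in> midx n (N - 1)"
    using BD dN by (intro midx_madd[where s=d]) (auto simp: mdeg_munit)
  have "Top i (Top j x) = (\<Sum>b\<in>B. sv (x b) (Top i (Cf (madd b (munit n j)))))"
    unfolding Top_expand[of j] by (simp add: lin_sum[OF lin_Top] lin_sv[OF lin_Top])
  also have "\<dots> = (\<Sum>b\<in>B. sv (x b) (Cf (madd (madd b (munit n j)) (munit n i))))"
    using SC sh i j by (intro sum.cong refl) auto
  also have "\<dots> = (\<Sum>b\<in>B. sv (x b) (Cf (madd (madd b (munit n i)) (munit n j))))"
    using lb by (intro sum.cong refl) (simp add: madd_assoc madd_comm[of "munit n j" "munit n i"])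
  also have "\<dots> = (\<Sum>b\<in>B. sv (x b) (Top j (Cf (madd b (munit n i)))))"
    using SC sh i j by (intro sum.cong refl) auto
  also have "\<dots> = Top j (Top i x)"
    unfolding Top_expand[of i] by (simp add: lin_sum[OF lin_Top] lin_sv[OF lin_Top])
  finally show ?thesis .
qed

lemma SF2:
  assumes fin: "finite I" and g: "\<forall>a\<in>I. madd a ga \<in> IN" and h: "\<forall>b\<in>I. madd b gb \<in> IN"
  shows "(\<Sum>a\<in>I. \<Sum>b\<in>I. cnj (u a) * y' (madd a ga) (madd b gb) * w b)
     = F (\<Sum>a\<in>I. sv (u a) (Cf (madd a ga))) (\<Sum>b\<in>I. sv (w b) (Cf (madd b gb)))"
  unfolding qf_sum_left unfolding qf_sum_right qf_sv_left qf_sv_right sum_distrib_left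
  using g h by (intro sum.cong refl) (simp add: Y mult.commute mult.left_commute)

lemma block_hyp:
  assumes bl: "psd ({0, 1, 2} \<times> midx n d) (block_mat n i j y')"
    and p0: "p0 \<in> {1, 2}" and bk: "bexp n i j p0 = munit n k" and k: "k < n"
    and x: "x \<in> vsupp B" and w: "w \<in> vsupp B"
  shows "0 \<le> Re (F x x + F (Top k x) w + F w (Top k x) + F (Top k w) (Top k w))"
proof -
  let ?I = "midx n d"
  let ?P = "{0::nat, p0}"
  have p00: "p0 \<noteq> 0" using p0 by auto
  have psdP: "psd (?P \<times> ?I) (block_mat n i j y')"
    by (rule psd_mono[OF bl]) (use p0 finite_midx in auto)
  define vec where "vec = (\<lambda>p::nat. if p = 0 then x else w)"
  define V where "V = (\<lambda>(p, a). vec p a)"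
  have vecV: "vec p \<in> vsupp B" for p using x w unfolding vec_def by auto
  define S where "S = (\<lambda>p u. \<Sum>a\<in>B. sv (u a) (Cf (madd a (bexp n i j p))))"
  have lb: "\<And>b. b \<in> B \<Longrightarrow> length b = n" using BD unfolding midx_def by auto
  have S0: "S 0 u = u" if "u \<in> vsupp B" for u
  proof -
    have "S 0 u = (\<Sum>a\<in>B. sv (u a) (dlt a))"
      unfolding S_def bexp_def using lb Cf_B by (intro sum.cong refl) auto
    then show ?thesis using Cf_expand[OF that] by simp
  qed
  have Sp0: "S p0 u = Top k u" for u unfolding S_def bk Top_def ..
  have BN': "\<And>p a. a \<in> B \<Longrightarrow> madd a (bexp n i j p) \<in> IN"
    using BD dN mdeg_munit_le[of n i] mdeg_munit_le[of n j]
    by (intro midx_madd[where s=d]) (auto simp: bexp_def length_bexp split: if_splits)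
  have trm: "qf ?I (\<lambda>a b. y' (madd a (bexp n i j q)) (madd b (bexp n i j p))) (vec p) (vec q)
      = F (S q (vec p)) (S p (vec q))" for p q
  proof -
    have "qf ?I (\<lambda>a b. y' (madd a (bexp n i j q)) (madd b (bexp n i j p))) (vec p) (vec q)
        = qf B (\<lambda>a b. y' (madd a (bexp n i j q)) (madd b (bexp n i j p))) (vec p) (vec q)"
      by (rule qf_restrict[OF finite_midx BD vecV vecV])
    also have "\<dots> = F (S q (vec p)) (S p (vec q))"
      unfolding S_def by (subst qf_def, rule SF2[OF finB]) (use BN' in auto)
    finally show ?thesis .
  qed
  have "qf (?P \<times> ?I) (block_mat n i j y') V V
      = (\<Sum>p\<in>?P. \<Sum>q\<in>?P. qf ?I (\<lambda>a b. y' (madd a (bexp n i j q)) (madd b (bexp n i j p))) (vec p) (vec q))"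
  proof -
    have "qf (?P \<times> ?I) (block_mat n i j y') V V
        = (\<Sum>p\<in>?P. \<Sum>a\<in>?I. \<Sum>q\<in>?P. \<Sum>b\<in>?I. cnj (vec p a) * y' (madd a (bexp n i j q)) (madd b (bexp n i j p)) * vec q b)"
      unfolding qf_def sum_prod2 V_def block_mat_def loc_mono_poly
      by (simp add: sum_distrib_left sum_distrib_right)
    also have "\<dots> = (\<Sum>p\<in>?P. \<Sum>q\<in>?P. \<Sum>a\<in>?I. \<Sum>b\<in>?I. cnj (vec p a) * y' (madd a (bexp n i j q)) (madd b (bexp n i j p)) * vec q b)"
      by (intro sum.cong refl) (rule sum.swap)
    finally show ?thesis unfolding qf_def .
  qed
  also have "\<dots> = F (S 0 (vec 0)) (S 0 (vec 0)) + F (S p0 (vec 0)) (S 0 (vec p0))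
      + (F (S 0 (vec p0)) (S p0 (vec 0)) + F (S p0 (vec p0)) (S p0 (vec p0)))"
    using p00 by (simp add: trm)
  also have "\<dots> = F x x + F (Top k x) w + (F w (Top k x) + F (Top k w) (Top k w))"
    using p00 by (simp add: vec_def S0 Sp0 x w)
  finally have "qf (?P \<times> ?I) (block_mat n i j y') V V = F x x + F (Top k x) w + F w (Top k x) + F (Top k w) (Top k w)"
    by (simp add: add.assoc)
  then show ?thesis using psd_qf[OF psdP, of V] by simp
qed

end


locale bwd2 = bwd +
  assumes n1: "n > 1"
    and blocks: "\<forall>i j. i < j \<and> j < n \<longrightarrow> psd ({0, 1, 2} \<times> midx n d) (block_mat n i j y')"
begin

lemma hyp: assumes k: "k < n"
  shows "\<forall>x\<in>vsupp B. \<forall>w\<in>vsupp B. 0 \<le> Re (F x x + F (Top k x) w + F w (Top k x) + F (Top k w) (Top k w))"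
proof (intro ballI)
  fix x w assume x: "x \<in> vsupp B" and w: "w \<in> vsupp B"
  show "0 \<le> Re (F x x + F (Top k x) w + F w (Top k x) + F (Top k w) (Top k w))"
  proof (cases "k = 0")
    case True
    have "psd ({0, 1, 2} \<times> midx n d) (block_mat n 0 1 y')" using blocks n1 by blast
    moreover have "bexp n 0 1 1 = munit n k" using True by (simp add: bexp_def)
    ultimately show ?thesis using block_hyp[of 0 1 1 k x w] k x w by simp
  next
    case False
    have "psd ({0, 1, 2} \<times> midx n d) (block_mat n 0 k y')" using blocks k False by blast
    moreover have "bexp n 0 k 2 = munit n k" by (simp add: bexp_def)
    ultimately show ?thesis using block_hyp[of 0 k 2 k x w] k x w by simp
  qed
qed

lemma eigadj: "\<forall>i<n. \<forall>e\<in>vsupp B. \<forall>\<mu>. Top i e = sv \<mu> e \<longrightarrow> (\<forall>x\<in>vsupp B. F e (Top i x) = \<mu> * F e x)"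
proof (intro allI impI ballI)
  fix i e \<mu> x assume i: "i < n" and e: "e \<in> vsupp B" and te: "Top i e = sv \<mu> e" and x: "x \<in> vsupp B"
  have pa: "\<forall>x. 0 \<le> Re (F x x)" using pos by blast
  have tv: "\<forall>x. Top i x \<in> vsupp B" using Top_V by blast
  show "F e (Top i x) = \<mu> * F e x"
    by (rule hypo_eigadj[OF hermB pa lin_Top tv hyp[OF i] e te x])
qed

sublocale S: spec B y' n Top
proof unfold_locales
  show "finite B" by (rule finB)
  show "\<forall>a\<in>B. \<forall>b\<in>B. y' b a = cnj (y' a b)" by (rule hermB)
  show "\<forall>x. 0 \<le> Re (F x x)" using pos by blast
  show "\<forall>x\<in>vsupp B. F x x = 0 \<longrightarrow> x = 0" using def by blast
  show "\<forall>i<n. lin (Top i)" using lin_Top by blast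
  show "\<forall>i<n. \<forall>x. Top i x \<in> vsupp B" using Top_V by blast
  show "\<forall>i<n. \<forall>j<n. \<forall>x. Top i (Top j x) = Top j (Top i x)" using comm by blast
  show "\<forall>i<n. \<forall>e\<in>vsupp B. \<forall>\<mu>. Top i e = sv \<mu> e \<longrightarrow> (\<forall>x\<in>vsupp B. F e (Top i x) = \<mu> * F e x)"
    by (rule eigadj)
qed

lemma pars: assumes o: "S.onje es lam L" and c: "\<forall>x\<in>vsupp B. (\<forall>j<L. F (es j) x = 0) \<longrightarrow> x = 0"
  and x: "x \<in> vsupp B" and z: "z \<in> vsupp B"
  shows "F x z = (\<Sum>j<L. cnj (F (es j) x) * F (es j) z)"
proof -
  have "F x z = F x (\<Sum>j<L. sv (F (es j) z) (es j))" using S.onje_expand[OF o c z] by simp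
  also have "\<dots> = (\<Sum>j<L. F (es j) z * F x (es j))" by (simp add: qf_sum_right qf_sv_right)
  also have "\<dots> = (\<Sum>j<L. cnj (F (es j) x) * F (es j) z)"
    using S.Fcnj by (intro sum.cong refl) (metis mult.commute)
  finally show ?thesis .
qed

lemma E2: assumes o: "S.onje es lam L" and j: "j < L"
  shows "a \<in> midx n d \<Longrightarrow> F (es j) (Cf a) = zmon (map (lam j) [0..<n]) a * F (es j) (Cf (mzero n))"
proof (induction "mdeg a" arbitrary: a rule: less_induct)
  case less
  have la: "length a = n" using less unfolding midx_def by simp
  show ?case
  proof (cases "mdeg a = 0")
    case True then show ?thesis using mdeg0[OF la] by simp
  next
    case False
    then obtain k a' where ka: "k < n" "a = madd a' (munit n k)" "length a' = n" "mdeg a = Suc (mdeg a')"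
      using mdecomp[OF la] by blast
    have a'd: "a' \<in> midx n d" using ka less unfolding midx_def by simp
    have "d \<le> N - 1" using dN by simp
    then have a'N: "a' \<in> midx n (N - 1)" using a'd midx_mono[of d "N - 1" n] by blast
    have ej: "es j \<in> vsupp B" "Top k (es j) = sv (lam j k) (es j)" using o j ka unfolding S.onje_def by auto
    have "F (es j) (Cf a) = F (es j) (Top k (Cf a'))" using SC[OF a'N ka(1)] ka by simp
    also have "\<dots> = lam j k * F (es j) (Cf a')" using eigadj ka(1) ej Cf_V by blast
    also have "\<dots> = lam j k * (zmon (map (lam j) [0..<n]) a' * F (es j) (Cf (mzero n)))"
      using less(1)[of a'] ka a'd by simp
    also have "\<dots> = zmon (map (lam j) [0..<n]) a * F (es j) (Cf (mzero n))"
      using ka by (simp add: zmon_madd zmon_munit)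
    finally show ?thesis .
  qed
qed

lemma E1: assumes o: "S.onje es lam L" and j: "j < L"
  shows "length g = n \<Longrightarrow> mdeg g \<le> N - d \<Longrightarrow>
    (\<Sum>b\<in>B. sv (es j b) (Cf (madd b g))) = sv (zmon (map (lam j) [0..<n]) g) (es j)"
proof (induction "mdeg g" arbitrary: g rule: less_induct)
  case less
  have ej: "es j \<in> vsupp B" using o j unfolding S.onje_def by auto
  have lb: "\<And>b. b \<in> B \<Longrightarrow> length b = n" using BD unfolding midx_def by auto
  show ?case
  proof (cases "mdeg g = 0")
    case True
    then have g0: "g = mzero n" using mdeg0[of g n] less by simp
    have "(\<Sum>b\<in>B. sv (es j b) (Cf (madd b g))) = (\<Sum>b\<in>B. sv (es j b) (dlt b))"
      using g0 lb Cf_B by (intro sum.cong refl) auto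
    then show ?thesis using Cf_expand[OF ej] g0 by simp
  next
    case False
    then obtain k g' where kg: "k < n" "g = madd g' (munit n k)" "length g' = n" "mdeg g = Suc (mdeg g')"
      using mdecomp less by blast
    have bN: "madd b g' \<in> midx n (N - 1)" if b: "b \<in> B" for b
      using b BD kg less dN by (intro midx_madd[where s=d]) (auto simp: midx_def)
    have "(\<Sum>b\<in>B. sv (es j b) (Cf (madd b g))) = (\<Sum>b\<in>B. sv (es j b) (Top k (Cf (madd b g'))))"
      using SC[OF bN kg(1)] kg lb by (intro sum.cong refl) (simp add: madd_assoc)
    also have "\<dots> = Top k (\<Sum>b\<in>B. sv (es j b) (Cf (madd b g')))"
      by (simp add: lin_sum[OF lin_Top] lin_sv[OF lin_Top])
    also have "\<dots> = Top k (sv (zmon (map (lam j) [0..<n]) g') (es j))"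
      using less(1)[of g'] kg less by simp
    also have "\<dots> = sv (zmon (map (lam j) [0..<n]) g' * lam j k) (es j)"
      using o j kg unfolding S.onje_def by (simp add: lin_sv[OF lin_Top])
    also have "zmon (map (lam j) [0..<n]) g' * lam j k = zmon (map (lam j) [0..<n]) g"
      using kg by (simp add: zmon_madd zmon_munit)
    finally show ?thesis .
  qed
qed

end


lemma loc_alt: "loc_mat g y a b = (\<Sum>p\<in>psupp g. g (fst p) (snd p) * y (madd a (fst p)) (madd b (snd p)))"
  unfolding loc_mat_def by (simp add: case_prod_beta)

lemma peval_alt: "peval g z = (\<Sum>p\<in>psupp g. g (fst p) (snd p) * zmon z (fst p) * cnj (zmon z (snd p)))"
  unfolding peval_def by (simp add: case_prod_beta)

context bwd2 begin

lemma represent: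
  fixes m :: nat and g :: "nat \<Rightarrow> cpoly" and s :: "nat \<Rightarrow> nat"
  assumes gk: "\<forall>i<m. real_cpoly n (g i) \<and> psd (midx n (s i)) (loc_mat (g i) y') \<and> d \<le> s i
      \<and> (\<forall>p\<in>psupp (g i). mdeg (fst p) \<le> N - d \<and> mdeg (snd p) \<le> N - d)"
  shows "\<exists>pts (w::nat\<Rightarrow>real). length pts = card B \<and> distinct pts \<and> (\<forall>j<card B. pts ! j \<in> Kset n m g \<and> 0 < w j)
     \<and> (\<forall>\<alpha>\<in>midx n d. \<forall>\<beta>\<in>midx n d. y' \<alpha> \<beta> = (\<Sum>j<card B. complex_of_real (w j) * zmon (pts ! j) \<alpha> * cnj (zmon (pts ! j) \<beta>)))"
proof -
  obtain es lam L where o: "S.onje es lam L" and c: "\<forall>x\<in>vsupp B. (\<forall>j<L. F (es j) x = 0) \<longrightarrow> x = 0"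
    using S.onje_complete by blast
  have L: "L = card B" using S.onje_card[OF o c] .
  define lamL where "lamL = (\<lambda>j. map (lam j) [0..<n])"
  define pt where "pt = (\<lambda>j. map cnj (lamL j))"
  define cc where "cc = (\<lambda>j. F (es j) (Cf (mzero n)))"
  define w where "w = (\<lambda>j. (cmod (cc j))\<^sup>2)"
  have ll: "length (lamL j) = n" for j unfolding lamL_def by simp
  have lpt: "length (pt j) = n" for j unfolding pt_def using ll by simp
  have ejV: "\<And>j. j < L \<Longrightarrow> es j \<in> vsupp B" using o unfolding S.onje_def by auto
  have ejj: "\<And>j k. j < L \<Longrightarrow> k < L \<Longrightarrow> F (es j) (es k) = (if j = k then 1 else 0)" using o unfolding S.onje_def by auto
  have lb: "\<And>b. b \<in> B \<Longrightarrow> length b = n" using BD unfolding midx_def by auto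
  have E2': "\<And>j a. j < L \<Longrightarrow> a \<in> midx n d \<Longrightarrow> F (es j) (Cf a) = zmon (lamL j) a * cc j"
    using E2[OF o] unfolding lamL_def cc_def by blast
  have Fdlt: "\<And>j b. j < L \<Longrightarrow> b \<in> B \<Longrightarrow> F (es j) (dlt b) = zmon (lamL j) b * cc j"
    using E2' Cf_B BD by (metis subsetD)
  have Fexp: "F e x = (\<Sum>b\<in>B. x b * F e (dlt b))" if "x \<in> vsupp B" for e x
  proof -
    have "F e x = F e (\<Sum>b\<in>B. sv (x b) (dlt b))" using Cf_expand[OF that] by simp
    also have "\<dots> = (\<Sum>b\<in>B. x b * F e (dlt b))" by (simp add: qf_sum_right qf_sv_right)
    finally show ?thesis .
  qed
  have cc0: "cc j \<noteq> 0" if j: "j < L" for j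
  proof
    assume "cc j = 0"
    then have "F (es j) (es j) = 0" using Fexp[OF ejV[OF j]] Fdlt[OF j] by simp
    then show False using ejj[OF j j] by simp
  qed
  have wpos: "0 < w j" if "j < L" for j unfolding w_def using cc0[OF that] by simp
  have inj: "pt j \<noteq> pt k" if jk: "j < L" "k < L" "j \<noteq> k" for j k
  proof
    assume "pt j = pt k"
    moreover have "\<And>j. lamL j = map cnj (pt j)" unfolding pt_def by (simp add: map_map o_def)
    ultimately have eqL: "lamL j = lamL k" by metis
    have "cc k * F (es j) (es j) = cc j * F (es k) (es j)"
      using Fexp[OF ejV[OF jk(1)], of "es j"] Fexp[OF ejV[OF jk(1)], of "es k"] Fdlt jk eqL
      by (simp add: sum_distrib_left algebra_simps)
    then have "cc k = 0" using ejj jk by simp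
    then show False using cc0 jk by blast
  qed
  define pts where "pts = map pt [0..<L]"
  have "distinct pts" unfolding pts_def distinct_map using inj by (auto simp: inj_on_def) metis
  moreover have "length pts = card B" unfolding pts_def L by simp
  moreover have "\<forall>j<card B. pts ! j \<in> Kset n m g \<and> 0 < w j"
  proof (intro allI impI conjI)
    fix j assume "j < card B"
    then have j: "j < L" using L by simp
    show "0 < w j" by (rule wpos[OF j])
    have "\<forall>i<m. peval (g i) (pt j) \<in> \<real> \<and> 0 \<le> Re (peval (g i) (pt j))"
    proof (intro allI impI conjI)
      fix i assume i: "i < m"
      have gr: "real_cpoly n (g i)" and ps: "psd (midx n (s i)) (loc_mat (g i) y')" and ds: "d \<le> s i"
        and pb: "\<forall>p\<in>psupp (g i). mdeg (fst p) \<le> N - d \<and> mdeg (snd p) \<le> N - d" using gk i by auto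
      show "peval (g i) (pt j) \<in> \<real>" by (rule peval_real[OF gr])
      have fin: "finite (psupp (g i))" and plen: "\<forall>p\<in>psupp (g i). length (fst p) = n \<and> length (snd p) = n"
        using gr unfolding real_cpoly_def by auto
      have Bs: "B \<subseteq> midx n (s i)" using BD midx_mono[OF ds] by blast
      let ?e = "es j"
      have madN: "\<And>p b. p \<in> psupp (g i) \<Longrightarrow> b \<in> B \<Longrightarrow> madd b (fst p) \<in> IN \<and> madd b (snd p) \<in> IN"
      proof -
        fix p b assume p: "p \<in> psupp (g i)" and b: "b \<in> B"
        have bd: "b \<in> midx n d" using b BD by blast
        have "d + mdeg (fst p) \<le> N" "d + mdeg (snd p) \<le> N" using pb p dN by auto
        then show "madd b (fst p) \<in> IN \<and> madd b (snd p) \<in> IN"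
          using midx_madd[OF bd] plen p by auto
      qed
      have "qf (midx n (s i)) (loc_mat (g i) y') ?e ?e = qf B (loc_mat (g i) y') ?e ?e"
        by (rule qf_restrict[OF finite_midx Bs ejV[OF j] ejV[OF j]])
      also have "\<dots> = (\<Sum>p\<in>psupp (g i). g i (fst p) (snd p) *
          (\<Sum>a\<in>B. \<Sum>b\<in>B. cnj (?e a) * y' (madd a (fst p)) (madd b (snd p)) * ?e b))"
      proof -
        have "qf B (loc_mat (g i) y') ?e ?e = (\<Sum>a\<in>B. \<Sum>b\<in>B. \<Sum>p\<in>psupp (g i).
            g i (fst p) (snd p) * (cnj (?e a) * y' (madd a (fst p)) (madd b (snd p)) * ?e b))"
          unfolding qf_def loc_alt by (simp add: sum_distrib_left sum_distrib_right algebra_simps)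
        also have "\<dots> = (\<Sum>a\<in>B. \<Sum>p\<in>psupp (g i). \<Sum>b\<in>B.
            g i (fst p) (snd p) * (cnj (?e a) * y' (madd a (fst p)) (madd b (snd p)) * ?e b))"
          by (intro sum.cong refl) (rule sum.swap)
        also have "\<dots> = (\<Sum>p\<in>psupp (g i). \<Sum>a\<in>B. \<Sum>b\<in>B.
            g i (fst p) (snd p) * (cnj (?e a) * y' (madd a (fst p)) (madd b (snd p)) * ?e b))"
          by (rule sum.swap)
        finally show ?thesis by (simp add: sum_distrib_left)
      qed
      also have "\<dots> = (\<Sum>p\<in>psupp (g i). g i (fst p) (snd p) *
          F (sv (zmon (lamL j) (fst p)) ?e) (sv (zmon (lamL j) (snd p)) ?e))"
      proof (intro sum.cong refl)
        fix p assume p: "p \<in> psupp (g i)"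
        have "(\<Sum>a\<in>B. \<Sum>b\<in>B. cnj (?e a) * y' (madd a (fst p)) (madd b (snd p)) * ?e b)
            = F (\<Sum>a\<in>B. sv (?e a) (Cf (madd a (fst p)))) (\<Sum>b\<in>B. sv (?e b) (Cf (madd b (snd p))))"
          by (rule SF2[OF finB]) (use madN p in auto)
        also have "\<dots> = F (sv (zmon (lamL j) (fst p)) ?e) (sv (zmon (lamL j) (snd p)) ?e)"
          using E1[OF o j] plen pb p unfolding lamL_def by simp
        finally show "g i (fst p) (snd p) * (\<Sum>a\<in>B. \<Sum>b\<in>B. cnj (?e a) * y' (madd a (fst p)) (madd b (snd p)) * ?e b)
          = g i (fst p) (snd p) * F (sv (zmon (lamL j) (fst p)) ?e) (sv (zmon (lamL j) (snd p)) ?e)" by simp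
      qed
      also have "\<dots> = peval (g i) (pt j)"
        unfolding peval_alt using ejj[OF j j] plen
        by (intro sum.cong refl) (simp add: qf_sv_left qf_sv_right pt_def zmon_cnj ll)
      finally have "qf (midx n (s i)) (loc_mat (g i) y') ?e ?e = peval (g i) (pt j)" .
      then show "0 \<le> Re (peval (g i) (pt j))" using psd_qf[OF ps, of ?e] by simp
    qed
    then show "pts ! j \<in> Kset n m g" unfolding Kset_def pts_def using j lpt by simp
  qed
  moreover have "\<forall>\<alpha>\<in>midx n d. \<forall>\<beta>\<in>midx n d. y' \<alpha> \<beta> =
      (\<Sum>j<card B. complex_of_real (w j) * zmon (pts ! j) \<alpha> * cnj (zmon (pts ! j) \<beta>))"
  proof (intro ballI)
    fix \<alpha> \<beta> assume a: "\<alpha> \<in> midx n d" and b: "\<beta> \<in> midx n d"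
    have aN: "\<alpha> \<in> IN" "\<beta> \<in> IN" using a b midx_mono[of d N n] dN by auto
    have la: "length \<alpha> = n" "length \<beta> = n" using a b unfolding midx_def by auto
    have "y' \<alpha> \<beta> = F (Cf \<alpha>) (Cf \<beta>)" by (rule Y[OF aN])
    also have "\<dots> = (\<Sum>j<L. cnj (F (es j) (Cf \<alpha>)) * F (es j) (Cf \<beta>))"
      by (rule pars[OF o c Cf_V Cf_V])
    also have "\<dots> = (\<Sum>j<L. complex_of_real (w j) * zmon (pts ! j) \<alpha> * cnj (zmon (pts ! j) \<beta>))"
    proof (intro sum.cong refl)
      fix j assume "j \<in> {..<L}"
      then have j: "j < L" by simp
      have "cnj (F (es j) (Cf \<alpha>)) * F (es j) (Cf \<beta>) = cnj (zmon (lamL j) \<alpha> * cc j) * (zmon (lamL j) \<beta> * cc j)"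
        using E2'[OF j a] E2'[OF j b] by simp
      also have "\<dots> = (cnj (cc j) * cc j) * cnj (zmon (lamL j) \<alpha>) * zmon (lamL j) \<beta>" by (simp add: algebra_simps)
      also have "\<dots> = complex_of_real (w j) * zmon (pts ! j) \<alpha> * cnj (zmon (pts ! j) \<beta>)"
        unfolding w_def pts_def using j la ll by (simp add: cnj_mult_norm pt_def zmon_cnj)
      finally show "cnj (F (es j) (Cf \<alpha>)) * F (es j) (Cf \<beta>) = complex_of_real (w j) * zmon (pts ! j) \<alpha> * cnj (zmon (pts ! j) \<beta>)" .
    qed
    finally show "y' \<alpha> \<beta> = (\<Sum>j<card B. complex_of_real (w j) * zmon (pts ! j) \<alpha> * cnj (zmon (pts ! j) \<beta>))"
      using L by simp
  qed
  ultimately show ?thesis by blast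
qed

end


lemma dK_ge2: "2 \<le> dK m g"
  unfolding dK_def by (rule Max_ge) auto

lemma pdeg_le_dK: "i < m \<Longrightarrow> pdeg (g i) \<le> dK m g"
  unfolding dK_def by (rule Max_ge) auto

lemma pdeg_bound:
  assumes gr: "real_cpoly n g" and p: "p \<in> psupp g"
  shows "mdeg (fst p) \<le> pdeg g \<and> mdeg (snd p) \<le> pdeg g"
proof -
  have fin: "finite (psupp g)" using gr unfolding real_cpoly_def by auto
  have eq: "{max (mdeg \<alpha>) (mdeg \<beta>) | \<alpha> \<beta>. g \<alpha> \<beta> \<noteq> 0} = (\<lambda>(\<alpha>, \<beta>). max (mdeg \<alpha>) (mdeg \<beta>)) ` psupp g"
    unfolding psupp_def by auto
  have "max (mdeg (fst p)) (mdeg (snd p)) \<in> {max (mdeg \<alpha>) (mdeg \<beta>) | \<alpha> \<beta>. g \<alpha> \<beta> \<noteq> 0}"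
    using p unfolding psupp_def by (cases p) auto
  then have "max (mdeg (fst p)) (mdeg (snd p)) \<le> pdeg g"
    unfolding pdeg_def using fin eq by (intro Max_ge) auto
  then show ?thesis by simp
qed

theorem theorem5p1:
  fixes n d m :: nat and y :: cpoly and g :: "nat \<Rightarrow> cpoly" and R :: real
  assumes "n > 1" and "d \<ge> 1"
    and "\<forall>i<m. real_cpoly n (g i)"
    and "R > 0" and "\<exists>i<m. g i = ball_poly n R"
  shows "atomic_repr n d (Kset n m g) (mrank (midx n d) (mom_mat y)) y
    \<longleftrightarrow>
    (\<exists>y' :: cpoly.
       (\<forall>\<alpha>\<in>midx n d. \<forall>\<beta>\<in>midx n d. y' \<alpha> \<beta> = y \<alpha> \<beta>)
     \<and> psd (midx n (d + dK m g)) (mom_mat y')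
     \<and> (\<forall>i<m. psd (midx n (d + dK m g - pdeg (g i))) (loc_mat (g i) y'))
     \<and> mrank (midx n (d + dK m g)) (mom_mat y') = mrank (midx n d) (mom_mat y)
     \<and> (\<forall>i j. i < j \<and> j < n \<longrightarrow> psd ({0, 1, 2} \<times> midx n d) (block_mat n i j y')))"
proof
  assume ar: "atomic_repr n d (Kset n m g) (mrank (midx n d) (mom_mat y)) y"
  obtain y' where y': "(\<forall>\<alpha>\<in>midx n d. \<forall>\<beta>\<in>midx n d. y' \<alpha> \<beta> = y \<alpha> \<beta>)"
     "psd (midx n (d + dK m g)) (mom_mat y')"
     "(\<forall>i<m. \<forall>s. psd (midx n s) (loc_mat (g i) y'))"
     "mrank (midx n (d + dK m g)) (mom_mat y') = mrank (midx n d) (mom_mat y)"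
     "(\<forall>i j. psd ({0, 1, 2} \<times> midx n d) (block_mat n i j y'))"
    using forward[OF assms(3) _ ar, of "d + dK m g"] by auto
  then show "\<exists>y' :: cpoly.
       (\<forall>\<alpha>\<in>midx n d. \<forall>\<beta>\<in>midx n d. y' \<alpha> \<beta> = y \<alpha> \<beta>)
     \<and> psd (midx n (d + dK m g)) (mom_mat y')
     \<and> (\<forall>i<m. psd (midx n (d + dK m g - pdeg (g i))) (loc_mat (g i) y'))
     \<and> mrank (midx n (d + dK m g)) (mom_mat y') = mrank (midx n d) (mom_mat y)
     \<and> (\<forall>i j. i < j \<and> j < n \<longrightarrow> psd ({0, 1, 2} \<times> midx n d) (block_mat n i j y'))" by blast
next
  assume "\<exists>y' :: cpoly.
       (\<forall>\<alpha>\<in>midx n d. \<forall>\<beta>\<in>midx n d. y' \<alpha> \<beta> = y \<alpha> \<beta>)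
     \<and> psd (midx n (d + dK m g)) (mom_mat y')
     \<and> (\<forall>i<m. psd (midx n (d + dK m g - pdeg (g i))) (loc_mat (g i) y'))
     \<and> mrank (midx n (d + dK m g)) (mom_mat y') = mrank (midx n d) (mom_mat y)
     \<and> (\<forall>i j. i < j \<and> j < n \<longrightarrow> psd ({0, 1, 2} \<times> midx n d) (block_mat n i j y'))"
  then obtain y' where agree: "\<forall>\<alpha>\<in>midx n d. \<forall>\<beta>\<in>midx n d. y' \<alpha> \<beta> = y \<alpha> \<beta>"
    and psdN: "psd (midx n (d + dK m g)) y'"
    and loc: "\<forall>i<m. psd (midx n (d + dK m g - pdeg (g i))) (loc_mat (g i) y')"
    and rk: "mrank (midx n (d + dK m g)) y' = mrank (midx n d) y"
    and bl: "\<forall>i j. i < j \<and> j < n \<longrightarrow> psd ({0, 1, 2} \<times> midx n d) (block_mat n i j y')"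
    by auto
  define N where "N = d + dK m g"
  define r where "r = mrank (midx n d) y"
  have dN: "d + 2 \<le> N" unfolding N_def using dK_ge2[of m g] by simp
  obtain B where B: "B \<subseteq> midx n d" "cols_indep (midx n d) B y" "card B = r"
    using mrank_ex[OF finite_midx] r_def by blast
  have dN': "d \<le> N" using dN by simp
  have BN: "B \<subseteq> midx n N" using B(1) midx_mono[OF dN'] by blast
  have indB: "cols_indep (midx n N) B y'"
    by (rule cols_indep_rows[OF B(2) midx_mono[OF dN']]) (use B(1) agree in auto)
  have finB: "finite B" using B(1) finite_midx finite_subset by blast
  have spanN: "\<forall>a\<in>midx n N. \<exists>c. \<forall>x\<in>midx n N. y' x a = (\<Sum>b\<in>B. y' x b * c b)"
  proof (rule ballI, rule ccontr)
    fix a assume a: "a \<in> midx n N" and ns: "\<not> (\<exists>c. \<forall>x\<in>midx n N. y' x a = (\<Sum>b\<in>B. y' x b * c b))"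
    have aB: "a \<notin> B"
    proof
      assume "a \<in> B"
      then have "\<forall>x\<in>midx n N. y' x a = (\<Sum>b\<in>B. y' x b * dlt a b)"
        using bwd.dlt_sum finB by (simp add: dlt_def if_distrib cong: if_cong)
      then show False using ns by blast
    qed
    have "cols_indep (midx n N) (insert a B) y'"
      unfolding cols_indep_def
    proof (intro allI impI)
      fix c assume h: "\<forall>x\<in>midx n N. (\<Sum>b\<in>insert a B. y' x b * c b) = 0"
      have h': "\<forall>x\<in>midx n N. y' x a * c a + (\<Sum>b\<in>B. y' x b * c b) = 0"
        using h aB finB by simp
      have ca: "c a = 0"
      proof (rule ccontr)
        assume ca: "c a \<noteq> 0"
        have "\<forall>x\<in>midx n N. y' x a = (\<Sum>b\<in>B. y' x b * (- c b / c a))"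
        proof
          fix x assume x: "x \<in> midx n N"
          have "y' x a * c a = - (\<Sum>b\<in>B. y' x b * c b)" using h' x by (simp add: eq_neg_iff_add_eq_0)
          then have "y' x a = - (\<Sum>b\<in>B. y' x b * c b) / c a" using ca by (simp add: field_simps)
          also have "\<dots> = (\<Sum>b\<in>B. y' x b * (- c b / c a))"
            by (simp add: sum_divide_distrib sum_negf[symmetric])
          finally show "y' x a = (\<Sum>b\<in>B. y' x b * (- c b / c a))" .
        qed
        then have "\<exists>c. \<forall>x\<in>midx n N. y' x a = (\<Sum>b\<in>B. y' x b * c b)"
          by (intro exI[of _ "\<lambda>b. - c b / c a"]) simp
        then show False using ns by blast
      qed
      then have "\<forall>x\<in>midx n N. (\<Sum>b\<in>B. y' x b * c b) = 0" using h' by simp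
      then have "\<forall>b\<in>B. c b = 0" using indB unfolding cols_indep_def by blast
      then show "\<forall>b\<in>insert a B. c b = 0" using ca by simp
    qed
    moreover have "insert a B \<subseteq> midx n N" using a BN by blast
    ultimately have "card (insert a B) \<le> mrank (midx n N) y'" using mrank_ge[OF finite_midx] by blast
    then have "Suc r \<le> r" using aB finB B(3) rk r_def N_def by simp
    then show False by simp
  qed
  obtain ib where ib: "ib < m" "g ib = ball_poly n R" using assms(5) by blast
  have ball: "psd (midx n (N - 1)) (loc_mat (ball_poly n R) y')"
  proof -
    have "psd (midx n (N - pdeg (g ib))) (loc_mat (ball_poly n R) y')" using loc ib N_def by metis
    moreover have "N - 1 \<le> N - pdeg (g ib)" using pdeg_ball[OF assms(4), of n] ib by simp
    ultimately show ?thesis using psd_mono[OF _ midx_mono finite_midx] by blast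
  qed
  interpret bwd2 n d N y' B R
    by unfold_locales (use B(1) dN psdN[folded N_def] indB spanN assms(4) ball assms(1) bl in auto)
  have gk: "\<forall>i<m. real_cpoly n (g i) \<and> psd (midx n (N - pdeg (g i))) (loc_mat (g i) y') \<and> d \<le> N - pdeg (g i)
      \<and> (\<forall>p\<in>psupp (g i). mdeg (fst p) \<le> N - d \<and> mdeg (snd p) \<le> N - d)"
  proof (intro allI impI conjI)
    fix i assume i: "i < m"
    show gr: "real_cpoly n (g i)" using assms(3) i by blast
    show "psd (midx n (N - pdeg (g i))) (loc_mat (g i) y')" using loc i N_def by simp
    have pd: "pdeg (g i) \<le> dK m g" by (rule pdeg_le_dK[OF i])
    then show "d \<le> N - pdeg (g i)" unfolding N_def by simp
    show "\<forall>p\<in>psupp (g i). mdeg (fst p) \<le> N - d \<and> mdeg (snd p) \<le> N - d"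
      using pdeg_bound[OF gr] pd unfolding N_def by force
  qed
  obtain pts w where P: "length pts = card B" "distinct pts" "\<forall>j<card B. pts ! j \<in> Kset n m g \<and> 0 < w j"
     "\<forall>\<alpha>\<in>midx n d. \<forall>\<beta>\<in>midx n d. y' \<alpha> \<beta> = (\<Sum>j<card B. complex_of_real (w j) * zmon (pts ! j) \<alpha> * cnj (zmon (pts ! j) \<beta>))"
    using represent[OF gk] by blast
  show "atomic_repr n d (Kset n m g) (mrank (midx n d) (mom_mat y)) y"
    unfolding atomic_repr_def using P agree B(3) r_def by (intro exI[of _ pts] exI[of _ w]) auto
qed


end
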